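(* There exists a countable group $G$ with the following two properties: \begin{itemize} \item for every $m \geq 1$ and every $w \in F_m \setminus [F_m, F_m]$, the word map $w \colon G^m \to G$ is surjective; \item the real vector space $\operatorname{Q}(G)/\operatorname{Hom}(G)$ is infinite-dimensional. \end{itemize}
   Context: $F_m$ denotes the free group of rank $m$ with basis $x_1,\dots,x_m$. An element $w \in F_m$ defines a word map $w \colon G^m \to G$ by substituting $x_i \mapsto g_i$ for $(g_1,\dots,g_m)\in G^m$. A quasimorphism on $G$ is a function $\varphi\colon G\to\mathbb{R}$ with finite defect $D(\varphi)=\sup_{g,h\in G}|\varphi(g)+\varphi(h)-\varphi(gh)|$; it is homogeneous if $\varphi(g^n)=n\varphi(g)$ for all $g\in G$, $n\in\mathbb{Z}$. $\operatorname{Q}(G)$ is the real vector space of homogeneous quasimorphisms on $G$ and $\operatorname{Hom}(G)$ the subspace of homomorphisms $G\to\mathbb{R}$. *)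

theory Defs
  imports "HOL-Algebra.Algebra"
begin

text \<open>A letter (i, False) stands for the generator x_i, (i, True) for its inverse.
  Generators are indexed by 0..m-1.\<close>
type_synonym letter = "nat \<times> bool"

definition inverse_letters :: "letter \<Rightarrow> letter \<Rightarrow> bool" where
  "inverse_letters a b \<longleftrightarrow> fst a = fst b \<and> snd a \<noteq> snd b"

fun reduced :: "letter list \<Rightarrow> bool" where
  "reduced [] = True"
| "reduced [a] = True"
| "reduced (a # b # w) = (\<not> inverse_letters a b \<and> reduced (b # w))"

definition reduce :: "letter list \<Rightarrow> letter list" where
  "reduce w = foldr (\<lambda>a acc. case acc of [] \<Rightarrow> [a]
                     | b # rest \<Rightarrow> (if inverse_letters a b then rest else a # acc)) w []"

definition free_group :: "nat \<Rightarrow> letter list monoid" where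
  "free_group m = \<lparr> carrier = {w. (\<forall>a\<in>set w. fst a < m) \<and> reduced w},
                   monoid.mult = (\<lambda>u v. reduce (u @ v)),
                   one = [] \<rparr>"

definition commutator_subgroup_free :: "nat \<Rightarrow> letter list set" where
  "commutator_subgroup_free m = derived (free_group m) (carrier (free_group m))"

definition eval_letter :: "('a, 'b) monoid_scheme \<Rightarrow> (nat \<Rightarrow> 'a) \<Rightarrow> letter \<Rightarrow> 'a" where
  "eval_letter G g a = (if snd a then inv\<^bsub>G\<^esub> (g (fst a)) else g (fst a))"

definition word_map :: "('a, 'b) monoid_scheme \<Rightarrow> letter list \<Rightarrow> (nat \<Rightarrow> 'a) \<Rightarrow> 'a" where
  "word_map G w g = foldr (\<lambda>a acc. eval_letter G g a \<otimes>\<^bsub>G\<^esub> acc) w \<one>\<^bsub>G\<^esub>"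

definition word_map_surjective :: "('a, 'b) monoid_scheme \<Rightarrow> nat \<Rightarrow> letter list \<Rightarrow> bool" where
  "word_map_surjective G m w \<longleftrightarrow>
     (\<forall>h\<in>carrier G. \<exists>g. (\<forall>i<m. g i \<in> carrier G) \<and> word_map G w g = h)"

definition quasimorphism :: "('a, 'b) monoid_scheme \<Rightarrow> ('a \<Rightarrow> real) \<Rightarrow> bool" where
  "quasimorphism G \<phi> \<longleftrightarrow>
     (\<exists>D. \<forall>g\<in>carrier G. \<forall>h\<in>carrier G. \<bar>\<phi> g + \<phi> h - \<phi> (g \<otimes>\<^bsub>G\<^esub> h)\<bar> \<le> D)"

definition homogeneous_qm :: "('a, 'b) monoid_scheme \<Rightarrow> ('a \<Rightarrow> real) set" where
  "homogeneous_qm G = {\<phi>. quasimorphism G \<phi> \<and>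
     (\<forall>g\<in>carrier G. \<forall>n::int. \<phi> (g [^]\<^bsub>G\<^esub> n) = of_int n * \<phi> g)}"

definition real_homs :: "('a, 'b) monoid_scheme \<Rightarrow> ('a \<Rightarrow> real) set" where
  "real_homs G = {\<phi>. \<forall>g\<in>carrier G. \<forall>h\<in>carrier G. \<phi> (g \<otimes>\<^bsub>G\<^esub> h) = \<phi> g + \<phi> h}"

text \<open>Functions are compared on the carrier only (Q(G) consists of functions G \<rightarrow> R).
  Q(G)/Hom(G) is finite-dimensional iff finitely many elements of Q(G) span Q(G) modulo Hom(G).\<close>
definition qm_quotient_finite_dim :: "('a, 'b) monoid_scheme \<Rightarrow> bool" where
  "qm_quotient_finite_dim G \<longleftrightarrow>
     (\<exists>n::nat. \<exists>s :: nat \<Rightarrow> 'a \<Rightarrow> real. (\<forall>i<n. s i \<in> homogeneous_qm G) \<and>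
        (\<forall>\<phi>\<in>homogeneous_qm G. \<exists>c :: nat \<Rightarrow> real. \<exists>\<psi>\<in>real_homs G.
            \<forall>x\<in>carrier G. \<phi> x = \<psi> x + (\<Sum>i<n. c i * s i x)))"

end

theory Submission
  imports Defs Complex_Main
begin

definition inv_letter :: "letter \<Rightarrow> letter" where
  "inv_letter a = (fst a, \<not> snd a)"

definition rstep :: "letter \<Rightarrow> letter list \<Rightarrow> letter list" where
  "rstep a acc = (case acc of [] \<Rightarrow> [a]
                     | b # rest \<Rightarrow> (if inverse_letters a b then rest else a # acc))"

lemma rstep_Nil[simp]: "rstep a [] = [a]" by (simp add: rstep_def)
lemma rstep_Cons[simp]: "rstep a (b # rest) = (if inverse_letters a b then rest else a # b # rest)"
  by (simp add: rstep_def)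

lemma reduce_eq: "reduce w = foldr rstep w []"
  unfolding reduce_def rstep_def[abs_def] ..

lemma reduce_Nil[simp]: "reduce [] = []" by (simp add: reduce_eq)
lemma reduce_Cons: "reduce (a # w) = rstep a (reduce w)"
  by (simp add: reduce_eq)

lemma reduce_append: "reduce (u @ v) = foldr rstep u (reduce v)"
  by (induction u) (simp_all add: reduce_Cons)

lemma reduced_tl: "reduced (b # w) \<Longrightarrow> reduced w"
  by (cases w) auto

lemma reduced_rstep: "reduced acc \<Longrightarrow> reduced (rstep a acc)"
  by (cases acc) (auto simp: dest: reduced_tl)

lemma reduced_foldr: "reduced acc \<Longrightarrow> reduced (foldr rstep u acc)"
  by (induction u) (auto simp: reduced_rstep)

lemma reduced_reduce: "reduced (reduce w)"
  using reduced_foldr[of "[]" w] by (simp add: reduce_eq)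

lemma inverse_letters_inv: "inverse_letters a b \<longleftrightarrow> b = inv_letter a"
  by (cases a; cases b) (auto simp: inverse_letters_def inv_letter_def)

lemma inv_letter_inv[simp]: "inv_letter (inv_letter a) = a"
  by (simp add: inv_letter_def)

lemma rstep_inv: "reduced acc \<Longrightarrow> rstep (inv_letter a) (rstep a acc) = acc"
proof (cases acc)
  case Nil then show ?thesis by (simp add: inverse_letters_inv)
next
  case (Cons b rest)
  assume r: "reduced acc"
  show ?thesis
  proof (cases "inverse_letters a b")
    case True
    then have b: "b = inv_letter a" by (simp add: inverse_letters_inv)
    show ?thesis
    proof (cases rest)
      case Nil then show ?thesis using Cons True b by simp
    next
      case (Cons c r2)
      then have "\<not> inverse_letters b c" using r \<open>acc = b # rest\<close> by simp
      then show ?thesis using Cons \<open>acc = b # rest\<close> True b by simp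
    qed
  next
    case False
    then show ?thesis using Cons by (simp add: inverse_letters_inv)
  qed
qed

lemma reduce_reduced: "reduced w \<Longrightarrow> reduce w = w"
proof (induction w)
  case Nil then show ?case by simp
next
  case (Cons a w)
  then have "reduce w = w" using reduced_tl by blast
  then show ?case using Cons.prems by (cases w) (auto simp: reduce_Cons)
qed

lemma foldr_rstep_reduce: "reduced acc \<Longrightarrow> foldr rstep (reduce u) acc = foldr rstep u acc"
proof (induction u)
  case Nil then show ?case by simp
next
  case (Cons a u)
  have red: "reduced (foldr rstep (reduce u) acc)" using Cons.prems reduced_foldr by blast
  show ?case
  proof (cases "reduce u")
    case Nil
    then show ?thesis using Cons by (simp add: reduce_Cons)
  next
    case Cons2: (Cons b rest)
    show ?thesis
    proof (cases "inverse_letters a b")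
      case True
      then have b: "b = inv_letter a" by (simp add: inverse_letters_inv)
      have "foldr rstep (a # u) acc = rstep a (foldr rstep (reduce u) acc)" using Cons by simp
      also have "\<dots> = rstep a (rstep (inv_letter a) (foldr rstep rest acc))" using Cons2 b by simp
      also have "\<dots> = foldr rstep rest acc"
        using rstep_inv[of "foldr rstep rest acc" "inv_letter a"] reduced_foldr[OF Cons.prems] by simp
      finally show ?thesis using Cons2 True by (simp add: reduce_Cons)
    next
      case False
      then show ?thesis using Cons Cons2 by (simp add: reduce_Cons)
    qed
  qed
qed

lemma set_rstep: "set (rstep a acc) \<subseteq> insert a (set acc)"
  by (cases acc) auto

lemma set_foldr_rstep: "set (foldr rstep u acc) \<subseteq> set u \<union> set acc"
  by (induction u) (use set_rstep in fastforce)+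

lemma set_reduce: "set (reduce u) \<subseteq> set u"
  using set_foldr_rstep[of u "[]"] by (simp add: reduce_eq)

definition inv_word :: "letter list \<Rightarrow> letter list" where
  "inv_word u = rev (map inv_letter u)"

lemma inv_word_cancel: "reduced acc \<Longrightarrow> foldr rstep u (foldr rstep (inv_word u) acc) = acc"
proof (induction u arbitrary: acc)
  case Nil then show ?case by (simp add: inv_word_def)
next
  case (Cons a u)
  have "foldr rstep (a # u) (foldr rstep (inv_word (a # u)) acc)
      = rstep a (foldr rstep u (foldr rstep (inv_word u) (rstep (inv_letter a) acc)))"
    by (simp add: inv_word_def)
  also have "\<dots> = rstep a (rstep (inv_letter a) acc)"
    using Cons.IH[of "rstep (inv_letter a) acc"] reduced_rstep[OF Cons.prems] by simp
  also have "\<dots> = acc" using rstep_inv[OF Cons.prems, of "inv_letter a"] by simp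
  finally show ?case .
qed

lemma inv_word_cancel2: "reduced acc \<Longrightarrow> foldr rstep (inv_word u) (foldr rstep u acc) = acc"
  using inv_word_cancel[of acc "inv_word u"]
  by (simp add: inv_word_def rev_map comp_def)

lemma free_group_group: "group (free_group m)"
proof (rule groupI)
  let ?F = "free_group m"
  show "x \<otimes>\<^bsub>?F\<^esub> y \<in> carrier ?F" if "x \<in> carrier ?F" "y \<in> carrier ?F" for x y
    using that set_reduce[of "x @ y"] reduced_reduce[of "x @ y"]
    by (auto simp: free_group_def)
  show "\<one>\<^bsub>?F\<^esub> \<in> carrier ?F" by (simp add: free_group_def)
  show "x \<otimes>\<^bsub>?F\<^esub> y \<otimes>\<^bsub>?F\<^esub> z = x \<otimes>\<^bsub>?F\<^esub> (y \<otimes>\<^bsub>?F\<^esub> z)"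
    if "x \<in> carrier ?F" "y \<in> carrier ?F" "z \<in> carrier ?F" for x y z
  proof -
    have "reduce (reduce (x @ y) @ z) = foldr rstep (reduce (x @ y)) (reduce z)"
      by (simp add: reduce_append)
    also have "\<dots> = foldr rstep (x @ y) (reduce z)"
      by (simp add: foldr_rstep_reduce reduced_reduce)
    also have "\<dots> = foldr rstep x (reduce (y @ z))" by (simp add: reduce_append)
    also have "\<dots> = reduce (x @ reduce (y @ z))"
      by (simp only: reduce_append[of x] reduce_reduced[OF reduced_reduce])
    finally show ?thesis by (simp add: free_group_def)
  qed
  show "\<one>\<^bsub>?F\<^esub> \<otimes>\<^bsub>?F\<^esub> x = x" if "x \<in> carrier ?F" for x
    using that by (simp add: free_group_def reduce_reduced)
  show "\<exists>y\<in>carrier ?F. y \<otimes>\<^bsub>?F\<^esub> x = \<one>\<^bsub>?F\<^esub>" if "x \<in> carrier ?F" for x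
  proof (intro bexI)
    have rx: "reduce x = x" using that by (simp add: free_group_def reduce_reduced)
    have "reduce (reduce (inv_word x) @ x) = []"
      using inv_word_cancel2[of "[]" x] that rx
      using foldr_rstep_reduce[of x "inv_word x"] that
      by (simp add: reduce_append reduce_eq[symmetric] free_group_def)
    then show "reduce (inv_word x) \<otimes>\<^bsub>?F\<^esub> x = \<one>\<^bsub>?F\<^esub>" by (simp add: free_group_def)
    have "set (inv_word x) = inv_letter ` set x" by (simp add: inv_word_def)
    then show "reduce (inv_word x) \<in> carrier ?F"
      using that set_reduce[of "inv_word x"] reduced_reduce[of "inv_word x"]
      by (force simp: free_group_def inv_letter_def)
  qed
qed

lemma word_map_Nil[simp]: "word_map G [] g = \<one>\<^bsub>G\<^esub>"
  by (simp add: word_map_def)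
lemma word_map_Cons: "word_map G (a # w) g = eval_letter G g a \<otimes>\<^bsub>G\<^esub> word_map G w g"
  by (simp add: word_map_def)

lemma (in group) eval_letter_closed:
  "g (fst a) \<in> carrier G \<Longrightarrow> eval_letter G g a \<in> carrier G"
  by (simp add: eval_letter_def)

lemma (in group) word_map_closed:
  "\<forall>a\<in>set w. g (fst a) \<in> carrier G \<Longrightarrow> word_map G w g \<in> carrier G"
  by (induction w) (auto simp: word_map_Cons eval_letter_closed)

lemma word_map_hom:
  assumes "group_hom G H h" "\<forall>a\<in>set w. g (fst a) \<in> carrier G"
  shows "h (word_map G w g) = word_map H w (h \<circ> g)"
  using assms(2)
proof (induction w)
  case Nil then show ?case using assms(1) by (simp add: group_hom.hom_one)
next
  case (Cons a w)
  interpret group_hom G H h by fact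
  have ga: "g (fst a) \<in> carrier G" using Cons by simp
  have "h (eval_letter G g a) = eval_letter H (h \<circ> g) a"
    using ga by (simp add: eval_letter_def hom_inv)
  then show ?case using Cons ga
    by (simp add: word_map_Cons G.word_map_closed G.eval_letter_closed comp_def)
qed

definition expsum :: "nat \<Rightarrow> letter list \<Rightarrow> int" where
  "expsum j w = sum_list (map (\<lambda>a. if fst a = j then (if snd a then -1 else 1) else 0) w)"

lemma expsum_Nil[simp]: "expsum j [] = 0" by (simp add: expsum_def)
lemma expsum_Cons: "expsum j (a # w) = (if fst a = j then (if snd a then -1 else 1) else 0) + expsum j w"
  by (simp add: expsum_def)

lemma (in group) word_map_single:
  assumes y: "y \<in> carrier G"
  shows "word_map G w (\<lambda>i. if i = j then y else \<one>) = y [^] expsum j w"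
proof (induction w)
  case Nil then show ?case by simp
next
  case (Cons a w)
  have e: "eval_letter G (\<lambda>i. if i = j then y else \<one>) a
      = y [^] (if fst a = j then (if snd a then -1 else 1) else (0::int))"
    using y by (auto simp: eval_letter_def int_pow_neg)
  show ?case
    by (simp add: word_map_Cons Cons e expsum_Cons int_pow_mult y)
qed

lemma (in comm_group) word_map_comm:
  assumes I: "finite I" "\<forall>a\<in>set w. fst a \<in> I" and g: "g \<in> I \<rightarrow> carrier G"
  shows "word_map G w g = finprod G (\<lambda>j. g j [^] expsum j w) I"
  using assms(2)
proof (induction w)
  case Nil then show ?case by simp
next
  case (Cons a w)
  have aI: "fst a \<in> I" using Cons by simp
  have ga: "g (fst a) \<in> carrier G" using aI g by auto
  define e :: int where "e = (if snd a then -1 else 1)"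
  have ev: "eval_letter G g a = g (fst a) [^] e"
    using ga by (auto simp: eval_letter_def e_def int_pow_neg)
  have "finprod G (\<lambda>j. g j [^] expsum j (a # w)) I
      = finprod G (\<lambda>j. (if fst a = j then g (fst a) [^] e else \<one>) \<otimes> g j [^] expsum j w) I"
  proof (rule finprod_cong')
    show "g j [^] expsum j (a # w) = (if fst a = j then g (fst a) [^] e else \<one>) \<otimes> g j [^] expsum j w"
      if "j \<in> I" for j
    proof -
      have gj: "g j \<in> carrier G" using that g by auto
      show ?thesis using gj
        by (auto simp: expsum_Cons e_def int_pow_mult diff_conv_add_uminus add.commute m_comm)
    qed
  qed (use g aI ga in \<open>auto simp: Pi_iff\<close>)
  also have "\<dots> = finprod G (\<lambda>j. if fst a = j then g (fst a) [^] e else \<one>) I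
                 \<otimes> finprod G (\<lambda>j. g j [^] expsum j w) I"
    by (rule finprod_multf) (use g ga in auto)
  also have "finprod G (\<lambda>j. if fst a = j then g (fst a) [^] e else \<one>) I = g (fst a) [^] e"
    using finprod_singleton[of "fst a" I "\<lambda>_. g (fst a) [^] e"] aI I ga by auto
  finally show ?case using Cons ev by (simp add: word_map_Cons)
qed

definition basis_fg :: "nat \<Rightarrow> letter list" where
  "basis_fg j = [(j, False)]"

lemma free_group_inv_basis:
  assumes "j < m" shows "inv\<^bsub>free_group m\<^esub> (basis_fg j) = [(j, True)]"
proof -
  interpret group "free_group m" by (rule free_group_group)
  show ?thesis
  proof (rule inv_equality)
    show "[(j, True)] \<otimes>\<^bsub>free_group m\<^esub> basis_fg j = \<one>\<^bsub>free_group m\<^esub>"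
      by (simp add: free_group_def basis_fg_def reduce_Cons inverse_letters_def)
  qed (use assms in \<open>auto simp: free_group_def basis_fg_def\<close>)
qed

lemma word_map_free_basis:
  assumes "w \<in> carrier (free_group m)"
  shows "word_map (free_group m) w basis_fg = w"
proof -
  have "(\<forall>a\<in>set w. fst a < m) \<Longrightarrow> word_map (free_group m) w basis_fg = reduce w"
  proof (induction w)
    case Nil then show ?case by (simp add: free_group_def)
  next
    case (Cons a w)
    have ev: "eval_letter (free_group m) basis_fg a = [a]"
      using Cons.prems by (cases a) (auto simp: eval_letter_def free_group_inv_basis[unfolded basis_fg_def] basis_fg_def)
    have "word_map (free_group m) (a # w) basis_fg = [a] \<otimes>\<^bsub>free_group m\<^esub> reduce w"
      using Cons by (simp add: word_map_Cons ev)
    also have "\<dots> = reduce (a # w)"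
      by (simp add: free_group_def reduce_append reduce_Cons reduce_reduced reduced_reduce)
    finally show ?case .
  qed
  then show ?thesis using assms by (simp add: free_group_def reduce_reduced)
qed

lemma expsum_zero_derived:
  assumes w: "w \<in> carrier (free_group m)" and z: "\<forall>j<m. expsum j w = 0"
  shows "w \<in> commutator_subgroup_free m"
proof -
  let ?F = "free_group m"
  let ?C = "derived ?F (carrier ?F)"
  interpret F: group ?F by (rule free_group_group)
  have nC: "?C \<lhd> ?F" by (rule F.derived_self_is_normal)
  interpret N: normal ?C ?F by (rule nC)
  interpret Q: comm_group "?F Mod ?C" by (rule F.derived_quot_is_comm_group)
  have hom: "(\<lambda>x. ?C #>\<^bsub>?F\<^esub> x) \<in> hom ?F (?F Mod ?C)" by (rule N.r_coset_hom_Mod)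
  have gh: "group_hom ?F (?F Mod ?C) (\<lambda>x. ?C #>\<^bsub>?F\<^esub> x)"
    using hom by (simp add: group_hom_def group_hom_axioms_def F.group_axioms N.factorgroup_is_group)
  have bc: "\<forall>a\<in>set w. basis_fg (fst a) \<in> carrier ?F"
    using w by (auto simp: free_group_def basis_fg_def)
  have "?C #>\<^bsub>?F\<^esub> w = word_map (?F Mod ?C) w ((\<lambda>x. ?C #>\<^bsub>?F\<^esub> x) \<circ> basis_fg)"
    using word_map_hom[OF gh bc] word_map_free_basis[OF w] by simp
  also have "\<dots> = finprod (?F Mod ?C) (\<lambda>j. ((\<lambda>x. ?C #>\<^bsub>?F\<^esub> x) \<circ> basis_fg) j [^]\<^bsub>?F Mod ?C\<^esub> expsum j w) {..<m}"
  proof (rule Q.word_map_comm)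
    show "\<forall>a\<in>set w. fst a \<in> {..<m}" using w by (auto simp: free_group_def)
    show "(\<lambda>x. ?C #>\<^bsub>?F\<^esub> x) \<circ> basis_fg \<in> {..<m} \<rightarrow> carrier (?F Mod ?C)"
      using hom by (auto simp: hom_def free_group_def basis_fg_def)
  qed simp
  also have "\<dots> = finprod (?F Mod ?C) (\<lambda>j. \<one>\<^bsub>?F Mod ?C\<^esub>) {..<m}"
    by (rule Q.finprod_cong') (use z Q.one_closed in auto)
  also have "\<dots> = \<one>\<^bsub>?F Mod ?C\<^esub>" by (rule Q.finprod_one)
  also have "\<dots> = ?C" by simp
  finally have "?C #>\<^bsub>?F\<^esub> w = ?C" .
  moreover have "w \<in> ?C #>\<^bsub>?F\<^esub> w" using w by (simp add: F.rcos_self N.subgroup_axioms)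
  ultimately show ?thesis by (simp add: commutator_subgroup_free_def)
qed

definition divisible_grp :: "('a, 'b) monoid_scheme \<Rightarrow> bool" where
  "divisible_grp G \<longleftrightarrow> (\<forall>h\<in>carrier G. \<forall>n::nat. n \<ge> 1 \<longrightarrow> (\<exists>y\<in>carrier G. y [^]\<^bsub>G\<^esub> n = h))"

lemma (in group) divisible_int:
  assumes d: "divisible_grp G" and h: "h \<in> carrier G" and k: "k \<noteq> (0::int)"
  shows "\<exists>y\<in>carrier G. y [^] k = h"
proof (cases "k > 0")
  case True
  have "nat k \<ge> 1" using True by simp
  then obtain y where y: "y \<in> carrier G" "y [^] nat k = h" using d h
    unfolding divisible_grp_def by blast
  have "y [^] k = y [^] nat k" using True int_pow_int[of G y "nat k"] by simp
  then show ?thesis using y by auto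
next
  case False
  then have kn: "k = - int (nat (-k))" "nat (-k) \<ge> 1" using k by auto
  obtain y where y: "y \<in> carrier G" "y [^] nat (-k) = inv h" using d h kn(2)
    unfolding divisible_grp_def by (meson inv_closed)
  have "y [^] k = inv (y [^] nat (-k))" using y(1) kn(1) by (metis int_pow_neg_int)
  then show ?thesis using y h by auto
qed

lemma divisible_word_surj:
  fixes G :: "('a, 'b) monoid_scheme" (structure)
  assumes G: "group G" and d: "divisible_grp G"
    and w: "w \<in> carrier (free_group m) - commutator_subgroup_free m"
  shows "word_map_surjective G m w"
  unfolding word_map_surjective_def
proof
  interpret group G by fact
  fix h assume h: "h \<in> carrier G"
  obtain j where j: "j < m" "expsum j w \<noteq> 0"
    using expsum_zero_derived w by blast
  obtain y where y: "y \<in> carrier G" "y [^] expsum j w = h" using divisible_int[OF d h j(2)] by blast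
  show "\<exists>g. (\<forall>i<m. g i \<in> carrier G) \<and> word_map G w g = h"
    by (rule exI[of _ "\<lambda>i. if i = j then y else \<one>"]) (use y word_map_single in auto)
qed

lemma no_id_factor:
  fixes C :: "nat \<Rightarrow> nat \<Rightarrow> real" and M :: "nat \<Rightarrow> nat \<Rightarrow> real"
  assumes "finite I" "card I < card J"
    and "\<forall>j\<in>J. \<forall>k\<in>J. (\<Sum>i\<in>I. C j i * M i k) = (if j = k then 1 else 0)"
  shows False
  using assms
proof (induction I arbitrary: J C rule: finite_induct)
  case empty
  then obtain j where "j \<in> J" by (metis card.empty card_gt_0_iff ex_in_conv)
  then show ?case using empty by (metis one_neq_zero sum.empty)
next
  case (insert i0 I)
  have fJ: "finite J" using insert.prems(1) card.infinite by fastforce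
  show ?case
  proof (cases "\<forall>j\<in>J. C j i0 = 0")
    case True
    have "\<forall>j\<in>J. \<forall>k\<in>J. (\<Sum>i\<in>I. C j i * M i k) = (if j = k then 1 else 0)"
      using insert.prems(2) True insert.hyps by (simp add: sum.insert)
    moreover have "card I < card J" using insert.prems(1) insert.hyps by simp
    ultimately show False using insert.IH by blast
  next
    case False
    then obtain j0 where j0: "j0 \<in> J" "C j0 i0 \<noteq> 0" by blast
    define C' where "C' j i = C j i - (C j i0 / C j0 i0) * C j0 i" for j i
    have "\<forall>j\<in>J - {j0}. \<forall>k\<in>J - {j0}. (\<Sum>i\<in>I. C' j i * M i k) = (if j = k then 1 else 0)"
    proof (intro ballI)
      fix j k assume j: "j \<in> J - {j0}" and k: "k \<in> J - {j0}"
      have "(\<Sum>i\<in>I. C' j i * M i k) = (\<Sum>i\<in>insert i0 I. C' j i * M i k)"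
        using insert.hyps j0 by (simp add: sum.insert C'_def)
      also have "\<dots> = (\<Sum>i\<in>insert i0 I. C j i * M i k) - (C j i0 / C j0 i0) * (\<Sum>i\<in>insert i0 I. C j0 i * M i k)"
        by (simp add: C'_def algebra_simps sum_subtractf sum_distrib_left)
      also have "\<dots> = (if j = k then 1 else 0)"
        using insert.prems(2) j k j0 by auto
      finally show "(\<Sum>i\<in>I. C' j i * M i k) = (if j = k then 1 else 0)" .
    qed
    moreover have "card I < card (J - {j0})" using insert.prems(1) insert.hyps j0 fJ by simp
    ultimately show False using insert.IH by blast
  qed
qed

lemma not_fin_dim_crit:
  fixes G :: "('a, 'b) monoid_scheme" and psi :: "nat \<Rightarrow> 'a \<Rightarrow> real" and p q :: "nat \<Rightarrow> 'a"
  assumes G: "group G"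
    and psi: "\<And>j. psi j \<in> homogeneous_qm G"
    and pq: "\<And>k. p k \<in> carrier G" "\<And>k. q k \<in> carrier G"
    and d: "d \<noteq> 0"
    and delta: "\<And>j k. psi j (p k \<otimes>\<^bsub>G\<^esub> q k) - psi j (p k) - psi j (q k) = (if j = k then d else 0)"
  shows "\<not> qm_quotient_finite_dim G"
proof
  assume "qm_quotient_finite_dim G"
  then obtain n s where s: "\<forall>i<n. s i \<in> homogeneous_qm G"
    and rep: "\<forall>\<phi>\<in>homogeneous_qm G. \<exists>c :: nat \<Rightarrow> real. \<exists>\<psi>\<in>real_homs G.
            \<forall>x\<in>carrier G. \<phi> x = \<psi> x + (\<Sum>i<n. c i * s i x)"
    unfolding qm_quotient_finite_dim_def by blast
  have "\<forall>j. \<exists>c h. h \<in> real_homs G \<and> (\<forall>x\<in>carrier G. psi j x = h x + (\<Sum>i<n. c i * s i x))"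
    using rep psi by blast
  then obtain cc hh where ch: "\<And>j. hh j \<in> real_homs G"
      "\<And>j x. x \<in> carrier G \<Longrightarrow> psi j x = hh j x + (\<Sum>i<n. cc j i * s i x)"
    by metis
  define M where "M i k = s i (p k \<otimes>\<^bsub>G\<^esub> q k) - s i (p k) - s i (q k)" for i k
  have pqc: "p k \<otimes>\<^bsub>G\<^esub> q k \<in> carrier G" for k using G pq by (simp add: group.is_monoid monoid.m_closed)
  have key: "psi j (p k \<otimes>\<^bsub>G\<^esub> q k) - psi j (p k) - psi j (q k) = (\<Sum>i<n. cc j i * M i k)" for j k
  proof -
    have hom: "hh j (p k \<otimes>\<^bsub>G\<^esub> q k) = hh j (p k) + hh j (q k)"
      using ch(1)[of j] pq unfolding real_homs_def by blast
    show ?thesis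
      using ch(2)[OF pqc, of j] ch(2)[OF pq(1), of j] ch(2)[OF pq(2), of j] hom
      by (simp add: M_def algebra_simps sum_subtractf sum_distrib_left sum.distrib)
  qed
  have "\<forall>j\<in>{..n}. \<forall>k\<in>{..n}. (\<Sum>i\<in>{..<n}. (cc j i / d) * M i k) = (if j = k then 1 else 0)"
  proof (intro ballI)
    fix j k
    have "(\<Sum>i\<in>{..<n}. (cc j i / d) * M i k) = (\<Sum>i<n. cc j i * M i k) / d"
      by (simp add: sum_divide_distrib)
    also have "\<dots> = (if j = k then 1 else 0)" using key[of j k] delta[of j k] d by (cases "j = k") auto
    finally show "(\<Sum>i\<in>{..<n}. (cc j i / d) * M i k) = (if j = k then 1 else 0)" .
  qed
  then show False using no_id_factor[of "{..<n}" "{..n}" "\<lambda>j i. cc j i / d" M] by simp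
qed

definition fsum :: "('a, 'b) monoid_scheme \<Rightarrow> (nat \<Rightarrow> 'a) monoid" where
  "fsum H = \<lparr> carrier = {u. (\<forall>i. u i \<in> carrier H) \<and> finite {i. u i \<noteq> \<one>\<^bsub>H\<^esub>}},
              monoid.mult = (\<lambda>u v i. u i \<otimes>\<^bsub>H\<^esub> v i),
              one = (\<lambda>i. \<one>\<^bsub>H\<^esub>) \<rparr>"

lemma fsum_carrier: "u \<in> carrier (fsum H) \<longleftrightarrow> (\<forall>i. u i \<in> carrier H) \<and> finite {i. u i \<noteq> \<one>\<^bsub>H\<^esub>}"
  by (simp add: fsum_def)
lemma fsum_mult: "(u \<otimes>\<^bsub>fsum H\<^esub> v) i = u i \<otimes>\<^bsub>H\<^esub> v i"
  by (simp add: fsum_def)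
lemma fsum_one: "\<one>\<^bsub>fsum H\<^esub> i = \<one>\<^bsub>H\<^esub>"
  by (simp add: fsum_def)

lemma fsum_group: assumes H: "group H" shows "group (fsum H)"
proof -
  interpret H: group H by fact
  show ?thesis
  proof (rule groupI)
    show "x \<otimes>\<^bsub>fsum H\<^esub> y \<in> carrier (fsum H)" if "x \<in> carrier (fsum H)" "y \<in> carrier (fsum H)" for x y
    proof -
      have "{i. x i \<otimes>\<^bsub>H\<^esub> y i \<noteq> \<one>\<^bsub>H\<^esub>} \<subseteq> {i. x i \<noteq> \<one>\<^bsub>H\<^esub>} \<union> {i. y i \<noteq> \<one>\<^bsub>H\<^esub>}" by auto
      then show ?thesis using that by (auto simp: fsum_carrier fsum_def intro: finite_subset)
    qed
    show "\<one>\<^bsub>fsum H\<^esub> \<in> carrier (fsum H)" by (simp add: fsum_def)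
    show "x \<otimes>\<^bsub>fsum H\<^esub> y \<otimes>\<^bsub>fsum H\<^esub> z = x \<otimes>\<^bsub>fsum H\<^esub> (y \<otimes>\<^bsub>fsum H\<^esub> z)"
      if "x \<in> carrier (fsum H)" "y \<in> carrier (fsum H)" "z \<in> carrier (fsum H)" for x y z
      using that by (auto simp: fsum_def H.m_assoc)
    show "\<one>\<^bsub>fsum H\<^esub> \<otimes>\<^bsub>fsum H\<^esub> x = x" if "x \<in> carrier (fsum H)" for x
      using that by (auto simp: fsum_def)
    show "\<exists>y\<in>carrier (fsum H). y \<otimes>\<^bsub>fsum H\<^esub> x = \<one>\<^bsub>fsum H\<^esub>" if "x \<in> carrier (fsum H)" for x
    proof
      have "{i. inv\<^bsub>H\<^esub> x i \<noteq> \<one>\<^bsub>H\<^esub>} = {i. x i \<noteq> \<one>\<^bsub>H\<^esub>}"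
        using that by (auto simp: fsum_carrier)
      then show "(\<lambda>i. inv\<^bsub>H\<^esub> x i) \<in> carrier (fsum H)" using that by (auto simp: fsum_carrier)
      show "(\<lambda>i. inv\<^bsub>H\<^esub> x i) \<otimes>\<^bsub>fsum H\<^esub> x = \<one>\<^bsub>fsum H\<^esub>"
        using that by (auto simp: fsum_def)
    qed
  qed
qed

lemma fsum_pow: "(u [^]\<^bsub>fsum H\<^esub> (n::nat)) i = u i [^]\<^bsub>H\<^esub> n"
proof (induction n)
  case 0 show ?case by (simp only: nat_pow_0 fsum_one)
next
  case (Suc n) show ?case by (simp only: nat_pow_Suc fsum_mult Suc)
qed

lemma fsum_proj_hom: assumes "group H" shows "group_hom (fsum H) H (\<lambda>u. u j)"
  unfolding group_hom_def group_hom_axioms_def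
  using assms fsum_group[OF assms] by (auto simp: hom_def fsum_carrier fsum_mult)

lemma fsum_divisible:
  assumes H: "group H" and d: "divisible_grp H"
  shows "divisible_grp (fsum H)"
  unfolding divisible_grp_def
proof (intro ballI allI impI)
  interpret H: group H by fact
  fix u and n :: nat assume u: "u \<in> carrier (fsum H)" and n: "n \<ge> 1"
  define r where "r i = (if u i = \<one>\<^bsub>H\<^esub> then \<one>\<^bsub>H\<^esub> else (SOME y. y \<in> carrier H \<and> y [^]\<^bsub>H\<^esub> n = u i))" for i
  have ri: "r i \<in> carrier H \<and> r i [^]\<^bsub>H\<^esub> n = u i" for i
  proof (cases "u i = \<one>\<^bsub>H\<^esub>")
    case True then show ?thesis by (simp add: r_def)
  next
    case False
    have "\<exists>y. y \<in> carrier H \<and> y [^]\<^bsub>H\<^esub> n = u i" using d u n unfolding divisible_grp_def fsum_carrier by blast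
    then have "(SOME y. y \<in> carrier H \<and> y [^]\<^bsub>H\<^esub> n = u i) \<in> carrier H \<and>
               (SOME y. y \<in> carrier H \<and> y [^]\<^bsub>H\<^esub> n = u i) [^]\<^bsub>H\<^esub> n = u i"
      by (rule someI_ex)
    then show ?thesis using False unfolding r_def by simp
  qed
  show "\<exists>y\<in>carrier (fsum H). y [^]\<^bsub>fsum H\<^esub> n = u"
  proof
    have "{i. r i \<noteq> \<one>\<^bsub>H\<^esub>} \<subseteq> {i. u i \<noteq> \<one>\<^bsub>H\<^esub>}" by (auto simp: r_def)
    then show "r \<in> carrier (fsum H)" using u ri by (auto simp: fsum_carrier intro: finite_subset)
    show "r [^]\<^bsub>fsum H\<^esub> n = u" using ri by (auto simp: fsum_pow)
  qed
qed

definition ek :: "('a, 'b) monoid_scheme \<Rightarrow> nat \<Rightarrow> 'a \<Rightarrow> nat \<Rightarrow> 'a" where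
  "ek H k h = (\<lambda>i. if i = k then h else \<one>\<^bsub>H\<^esub>)"

lemma ek_carrier: "h \<in> carrier H \<Longrightarrow> group H \<Longrightarrow> ek H k h \<in> carrier (fsum H)"
  by (auto simp: ek_def fsum_carrier group.is_monoid monoid.one_closed)

lemma ek_mult: "group H \<Longrightarrow> ek H k h \<otimes>\<^bsub>fsum H\<^esub> ek H k h' = ek H k (h \<otimes>\<^bsub>H\<^esub> h')"
  by (auto simp: ek_def fsum_mult group.is_monoid monoid.l_one fun_eq_iff)

lemma countable_root_closure:
  fixes U :: "('a, 'b) monoid_scheme" (structure)
  assumes U: "group U" and d: "divisible_grp U" and X0: "countable X0" "X0 \<subseteq> carrier U"
  shows "\<exists>S. subgroup S U \<and> countable S \<and> X0 \<subseteq> S \<and> (\<forall>x\<in>S. \<forall>n::nat. n \<ge> 1 \<longrightarrow> (\<exists>y\<in>S. y [^]\<^bsub>U\<^esub> n = x))"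
proof -
  interpret U: group U by fact
  define rt where "rt x n = (SOME y. y \<in> carrier U \<and> y [^]\<^bsub>U\<^esub> (Suc n) = x)" for x n
  have rt: "x \<in> carrier U \<Longrightarrow> rt x n \<in> carrier U \<and> rt x n [^]\<^bsub>U\<^esub> (Suc n) = x" for x n
  proof -
    assume x: "x \<in> carrier U"
    have "\<exists>y. y \<in> carrier U \<and> y [^]\<^bsub>U\<^esub> (Suc n) = x" using d x unfolding divisible_grp_def
      by (metis Suc_le_mono zero_le One_nat_def)
    then show ?thesis unfolding rt_def by (rule someI_ex)
  qed
  define step where "step T = T \<union> {\<one>\<^bsub>U\<^esub>} \<union> (\<lambda>(a, b). a \<otimes>\<^bsub>U\<^esub> b) ` (T \<times> T) \<union> (\<lambda>a. inv\<^bsub>U\<^esub> a) ` T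
      \<union> (\<lambda>(a, n). rt a n) ` (T \<times> UNIV)" for T
  define Sk where "Sk k = (step ^^ k) X0" for k
  define S where "S = (\<Union>k. Sk k)"
  have Sk_Suc: "Sk (Suc k) = step (Sk k)" for k by (simp add: Sk_def)
  have cnt: "countable (Sk k)" for k
    by (induction k) (auto simp: Sk_def X0 step_def)
  have sub: "Sk k \<subseteq> carrier U" for k
  proof (induction k)
    case 0 then show ?case using X0 by (simp add: Sk_def)
  next
    case (Suc k) then show ?case using rt by (auto simp: Sk_Suc step_def)
  qed
  have mono: "Sk i \<subseteq> Sk j" if "i \<le> j" for i j
    using that
  proof (induction j)
    case 0 then show ?case by simp
  next
    case (Suc j)
    then show ?case
      by (cases "i = Suc j") (auto simp: Sk_Suc step_def le_Suc_eq)
  qed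
  have inS: "x \<in> S \<Longrightarrow> \<exists>k. x \<in> Sk k" for x by (auto simp: S_def)
  have two: "x \<in> S \<Longrightarrow> y \<in> S \<Longrightarrow> \<exists>k. x \<in> Sk k \<and> y \<in> Sk k" for x y
  proof -
    assume "x \<in> S" "y \<in> S"
    then obtain i j where "x \<in> Sk i" "y \<in> Sk j" by (auto simp: S_def)
    then show ?thesis using mono[of i "max i j"] mono[of j "max i j"] by auto
  qed
  have sg: "subgroup S U"
  proof
    show "S \<subseteq> carrier U" using sub by (auto simp: S_def)
    show "x \<otimes>\<^bsub>U\<^esub> y \<in> S" if xs: "x \<in> S" and ys: "y \<in> S" for x y
    proof -
      obtain k where "x \<in> Sk k" "y \<in> Sk k" using two[OF xs ys] by blast
      then have "x \<otimes>\<^bsub>U\<^esub> y \<in> Sk (Suc k)" by (auto simp: Sk_Suc step_def)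
      then show ?thesis by (auto simp: S_def)
    qed
    show "\<one>\<^bsub>U\<^esub> \<in> S" by (auto simp: S_def Sk_Suc step_def intro!: exI[of _ "Suc 0"])
    show "inv\<^bsub>U\<^esub> x \<in> S" if xs: "x \<in> S" for x
    proof -
      obtain k where "x \<in> Sk k" using inS[OF xs] by blast
      then have "inv\<^bsub>U\<^esub> x \<in> Sk (Suc k)" by (auto simp: Sk_Suc step_def)
      then show ?thesis by (auto simp: S_def)
    qed
  qed
  have roots: "\<forall>x\<in>S. \<forall>n::nat. n \<ge> 1 \<longrightarrow> (\<exists>y\<in>S. y [^]\<^bsub>U\<^esub> n = x)"
  proof (intro ballI allI impI)
    fix x and n :: nat assume x: "x \<in> S" and n: "n \<ge> 1"
    obtain k where k: "x \<in> Sk k" using inS[OF x] by blast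
    have "rt x (n - 1) \<in> Sk (Suc k)" using k by (force simp: Sk_Suc step_def)
    moreover have "rt x (n - 1) [^]\<^bsub>U\<^esub> n = x" using rt[of x "n - 1"] sub k n by auto
    ultimately show "\<exists>y\<in>S. y [^]\<^bsub>U\<^esub> n = x" by (auto simp: S_def)
  qed
  have "X0 \<subseteq> S" by (auto simp: S_def Sk_def intro!: exI[of _ 0])
  moreover have "countable S" using cnt by (simp add: S_def)
  ultimately show ?thesis using sg roots by blast
qed

lemma transport_nat:
  fixes U :: "('a, 'b) monoid_scheme" (structure)
  assumes U: "group U" and S: "subgroup S U" "countable S"
  shows "\<exists>(G :: nat monoid) fr. group G \<and> fr \<in> hom G U \<and> fr ` carrier G = S \<and> inj_on fr (carrier G)"
proof -
  interpret U: group U by fact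
  obtain tn :: "'a \<Rightarrow> nat" where tn: "inj_on tn S" using S(2) by (meson countableE)
  define fr where "fr = inv_into S tn"
  have fr_tn: "x \<in> S \<Longrightarrow> fr (tn x) = x" for x using tn by (simp add: fr_def)
  have SC: "S \<subseteq> carrier U" using S(1) by (rule subgroup.subset)
  define G :: "nat monoid" where "G = \<lparr> carrier = tn ` S, monoid.mult = (\<lambda>a b. tn (fr a \<otimes>\<^bsub>U\<^esub> fr b)), one = tn \<one>\<^bsub>U\<^esub> \<rparr>"
  have frS: "a \<in> tn ` S \<Longrightarrow> fr a \<in> S" for a using fr_tn by auto
  have m: "x \<in> S \<Longrightarrow> y \<in> S \<Longrightarrow> x \<otimes>\<^bsub>U\<^esub> y \<in> S" for x y using S(1) by (simp add: subgroup.m_closed)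
  have one: "\<one>\<^bsub>U\<^esub> \<in> S" using S(1) by (simp add: subgroup.one_closed)
  have iv: "x \<in> S \<Longrightarrow> inv\<^bsub>U\<^esub> x \<in> S" for x using S(1) by (simp add: subgroup.m_inv_closed)
  have grp: "group G"
  proof (rule groupI)
    show "x \<otimes>\<^bsub>G\<^esub> y \<in> carrier G" if "x \<in> carrier G" "y \<in> carrier G" for x y
      using that m frS by (auto simp: G_def)
    show "\<one>\<^bsub>G\<^esub> \<in> carrier G" using one by (simp add: G_def)
    show "x \<otimes>\<^bsub>G\<^esub> y \<otimes>\<^bsub>G\<^esub> z = x \<otimes>\<^bsub>G\<^esub> (y \<otimes>\<^bsub>G\<^esub> z)"
      if "x \<in> carrier G" "y \<in> carrier G" "z \<in> carrier G" for x y z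
    proof -
      have "fr x \<in> S" "fr y \<in> S" "fr z \<in> S" using that frS by (auto simp: G_def)
      then show ?thesis using SC m by (simp add: G_def fr_tn U.m_assoc subsetD)
    qed
    show "\<one>\<^bsub>G\<^esub> \<otimes>\<^bsub>G\<^esub> x = x" if "x \<in> carrier G" for x
      using that one SC by (auto simp: G_def fr_tn subsetD)
    show "\<exists>y\<in>carrier G. y \<otimes>\<^bsub>G\<^esub> x = \<one>\<^bsub>G\<^esub>" if xc: "x \<in> carrier G" for x
    proof -
      have "x \<in> tn ` S" using xc by (simp add: G_def)
      then obtain s where s: "s \<in> S" "x = tn s" by blast
      show ?thesis
      proof
      show "tn (inv\<^bsub>U\<^esub> s) \<in> carrier G" using iv s by (simp add: G_def)
      show "tn (inv\<^bsub>U\<^esub> s) \<otimes>\<^bsub>G\<^esub> x = \<one>\<^bsub>G\<^esub>"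
        using s iv SC by (auto simp: G_def fr_tn subsetD)
    qed
    qed
  qed
  have hom: "fr \<in> hom G U"
    unfolding hom_def using frS SC m by (auto simp: G_def fr_tn subsetD)
  have img: "fr ` carrier G = S" using fr_tn by (force simp: G_def)
  have inj: "inj_on fr (carrier G)" unfolding G_def using fr_tn by (auto intro: inj_onI)
  show ?thesis using grp hom img inj by blast
qed

definition qm_bound :: "('a, 'b) monoid_scheme \<Rightarrow> ('a \<Rightarrow> real) \<Rightarrow> real \<Rightarrow> bool" where
  "qm_bound G f D \<longleftrightarrow> (\<forall>x\<in>carrier G. \<forall>y\<in>carrier G. \<bar>f x + f y - f (x \<otimes>\<^bsub>G\<^esub> y)\<bar> \<le> D)"

definition homog :: "('a, 'b) monoid_scheme \<Rightarrow> ('a \<Rightarrow> real) \<Rightarrow> 'a \<Rightarrow> real" where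
  "homog G f x = lim (\<lambda>n. f (x [^]\<^bsub>G\<^esub> Suc n) / real (Suc n))"

declare nat_pow_Suc[simp del] monoid.nat_pow_Suc[simp del]

lemma div_aux2: "(P::real) > 0 \<Longrightarrow> Q > 0 \<Longrightarrow> \<bar>A\<bar> \<le> Q * D \<Longrightarrow> \<bar>A/(P*Q)\<bar> \<le> D/P"
proof -
  assume P: "P > 0" and Q: "Q > 0" and A: "\<bar>A\<bar> \<le> Q * D"
  have "\<bar>A/(P*Q)\<bar> = \<bar>A\<bar>/(P*Q)" using P Q by (simp add: abs_divide abs_mult)
  also have "\<dots> \<le> (Q*D)/(P*Q)" by (rule divide_right_mono) (use A P Q in auto)
  also have "\<dots> = D/P" using Q by simp
  finally show ?thesis .
qed

lemma div_aux3: "(K::real) > 0 \<Longrightarrow> K * F / (K + K*M) = F/(1+M)"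
proof -
  assume K: "K > 0"
  have "K + K*M = K * (1 + M)" by (simp add: algebra_simps)
  then show ?thesis using K by simp
qed

lemma div_aux: "(P::real) > 0 \<Longrightarrow> Q > 0 \<Longrightarrow> A/(P*Q) - B/P = (A - Q*B)/(P*Q)"
  by (simp add: field_simps)

context group
begin

declare nat_pow_Suc[simp del]

lemma qm_pow_bound:
  assumes D: "qm_bound G f D" and x: "x \<in> carrier G"
  shows "\<bar>f (x [^] Suc n) - real (Suc n) * f x\<bar> \<le> real n * D"
proof (induction n)
  case 0 then show ?case using x by (simp add: nat_pow_Suc)
next
  case (Suc n)
  have "\<bar>f (x [^] Suc n) + f x - f (x [^] Suc n \<otimes> x)\<bar> \<le> D"
    using D x unfolding qm_bound_def by (meson nat_pow_closed)
  moreover have "x [^] Suc (Suc n) = x [^] Suc n \<otimes> x" by (simp only: nat_pow_Suc)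
  ultimately show ?case using Suc by (simp add: algebra_simps)
qed

lemma qm_bound_nonneg: "qm_bound G f D \<Longrightarrow> 0 \<le> D"
  unfolding qm_bound_def by (meson abs_ge_zero one_closed order_trans)

lemma homog_aux:
  assumes D: "qm_bound G f D" and x: "x \<in> carrier G"
  shows "\<bar>f (x [^] (Suc p * Suc q)) / real (Suc p * Suc q) - f (x [^] Suc p) / real (Suc p)\<bar> \<le> D / real (Suc p)"
proof -
  have "\<bar>f ((x [^] Suc p) [^] Suc q) - real (Suc q) * f (x [^] Suc p)\<bar> \<le> real q * D"
    using qm_pow_bound[OF D, of "x [^] Suc p" q] x by simp
  moreover have "(x [^] Suc p) [^] Suc q = x [^] (Suc p * Suc q)" using x by (simp add: nat_pow_pow)
  ultimately have a0: "\<bar>f (x [^] (Suc p * Suc q)) - real (Suc q) * f (x [^] Suc p)\<bar> \<le> real q * D"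
    by simp
  moreover have "real q * D \<le> real (Suc q) * D" using qm_bound_nonneg[OF D] by (simp add: algebra_simps)
  ultimately have a: "\<bar>f (x [^] (Suc p * Suc q)) - real (Suc q) * f (x [^] Suc p)\<bar> \<le> real (Suc q) * D"
    by linarith
  have "f (x [^] (Suc p * Suc q)) / real (Suc p * Suc q) - f (x [^] Suc p) / real (Suc p)
      = (f (x [^] (Suc p * Suc q)) - real (Suc q) * f (x [^] Suc p)) / (real (Suc p) * real (Suc q))"
    unfolding of_nat_mult[of "Suc p" "Suc q"] by (rule div_aux) simp_all
  also have "\<bar>\<dots>\<bar> \<le> D / real (Suc p)"
    by (rule div_aux2) (use a in simp_all)
  finally show ?thesis .
qed

lemma homog_Cauchy:
  assumes D: "qm_bound G f D" and x: "x \<in> carrier G"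
  shows "Cauchy (\<lambda>n. f (x [^] Suc n) / real (Suc n))"
proof (rule metric_CauchyI)
  fix e :: real assume e: "0 < e"
  obtain M :: nat where M: "2 * D / e < real M" using reals_Archimedean2 by blast
  have D0: "0 \<le> D" by (rule qm_bound_nonneg[OF D])
  show "\<exists>M. \<forall>m\<ge>M. \<forall>n\<ge>M. dist (f (x [^] Suc m) / real (Suc m)) (f (x [^] Suc n) / real (Suc n)) < e"
  proof (intro exI allI impI)
    fix m n assume mn: "M \<le> m" "M \<le> n"
    let ?b = "\<lambda>n. f (x [^] Suc n) / real (Suc n)"
    let ?c = "f (x [^] (Suc m * Suc n)) / real (Suc m * Suc n)"
    have 1: "\<bar>?c - ?b m\<bar> \<le> D / real (Suc m)" using homog_aux[OF D x] by simp
    have 2: "\<bar>?c - ?b n\<bar> \<le> D / real (Suc n)" using homog_aux[OF D x, of n m] by (simp add: mult.commute)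
    have "D / real (Suc m) \<le> D / real (Suc M)" using mn D0 by (simp add: frac_le)
    moreover have "D / real (Suc n) \<le> D / real (Suc M)" using mn D0 by (simp add: frac_le)
    moreover have "2 * (D / real (Suc M)) < e"
    proof -
      have "2 * D < e * real M" using M e by (simp add: field_simps)
      also have "\<dots> \<le> e * real (Suc M)" using e by simp
      finally show ?thesis by (simp add: field_simps)
    qed
    ultimately show "dist (?b m) (?b n) < e" using 1 2 unfolding dist_real_def by linarith
  qed
qed

lemma homog_LIMSEQ:
  assumes D: "qm_bound G f D" and x: "x \<in> carrier G"
  shows "(\<lambda>n. f (x [^] Suc n) / real (Suc n)) \<longlonglongrightarrow> homog G f x"
  using homog_Cauchy[OF D x] unfolding homog_def
  by (simp add: Cauchy_convergent_iff convergent_LIMSEQ_iff)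

lemma homog_eqI:
  assumes "(\<lambda>n. f (x [^] Suc n) / real (Suc n)) \<longlonglongrightarrow> L"
  shows "homog G f x = L"
  using assms unfolding homog_def by (rule limI)

lemma homog_close:
  assumes D: "qm_bound G f D" and x: "x \<in> carrier G"
  shows "\<bar>homog G f x - f x\<bar> \<le> D"
proof -
  have b: "\<bar>f (x [^] Suc n) / real (Suc n) - f x\<bar> \<le> D" for n
  proof -
    have "f (x [^] Suc n) / real (Suc n) - f x = (f (x [^] Suc n) - real (Suc n) * f x) / real (Suc n)"
      by (simp add: field_simps)
    also have "\<bar>\<dots>\<bar> \<le> real n * D / real (Suc n)"
      using qm_pow_bound[OF D x, of n] by (simp add: abs_divide divide_right_mono)
    also have "\<dots> \<le> D" using qm_bound_nonneg[OF D] by (simp add: field_simps)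
    finally show ?thesis .
  qed
  have b1: "\<forall>n\<ge>0. f (x [^] Suc n) / real (Suc n) \<le> f x + D"
  proof (intro allI impI)
    fix n :: nat
    show "f (x [^] Suc n) / real (Suc n) \<le> f x + D" using b[of n] unfolding abs_le_iff by linarith
  qed
  have b2: "\<forall>n\<ge>0. f x - D \<le> f (x [^] Suc n) / real (Suc n)"
  proof (intro allI impI)
    fix n :: nat
    show "f x - D \<le> f (x [^] Suc n) / real (Suc n)" using b[of n] unfolding abs_le_iff by linarith
  qed
  have "homog G f x \<le> f x + D"
    by (rule LIMSEQ_le_const2[OF homog_LIMSEQ[OF D x]]) (use b1 in blast)
  moreover have "f x - D \<le> homog G f x"
    by (rule LIMSEQ_le_const[OF homog_LIMSEQ[OF D x]]) (use b2 in blast)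
  ultimately show ?thesis by auto
qed

lemma homog_one:
  shows "homog G f \<one> = 0"
proof (rule homog_eqI)
  have "(\<lambda>n. f \<one> * inverse (real (Suc n))) \<longlonglongrightarrow> f \<one> * 0"
    by (intro tendsto_mult tendsto_const LIMSEQ_inverse_real_of_nat)
  then show "(\<lambda>n. f (\<one> [^] Suc n) / real (Suc n)) \<longlonglongrightarrow> 0"
    by (simp add: divide_inverse)
qed

lemma homog_pow_nat:
  assumes D: "qm_bound G f D" and x: "x \<in> carrier G"
  shows "homog G f (x [^] (k::nat)) = real k * homog G f x"
proof (cases k)
  case 0 then show ?thesis by (simp add: homog_one)
next
  case (Suc k')
  let ?b = "\<lambda>n. f (x [^] Suc n) / real (Suc n)"
  define r where "r n = k * n + k'" for n
  have sm: "strict_mono r" using Suc by (auto simp: strict_mono_Suc_iff r_def)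
  have "(?b \<circ> r) \<longlonglongrightarrow> homog G f x" by (rule LIMSEQ_subseq_LIMSEQ[OF homog_LIMSEQ[OF D x] sm])
  then have "(\<lambda>n. real k * (?b \<circ> r) n) \<longlonglongrightarrow> real k * homog G f x"
    by (intro tendsto_mult tendsto_const)
  moreover have "real k * (?b \<circ> r) n = f ((x [^] k) [^] Suc n) / real (Suc n)" for n
  proof -
    have "Suc (r n) = k * Suc n" using Suc by (simp add: r_def)
    moreover have "(x [^] k) [^] Suc n = x [^] (k * Suc n)" using x by (simp add: nat_pow_pow)
    moreover have "real (k * Suc n) = real k * real (Suc n)" by (simp only: of_nat_mult)
    moreover have "real k > 0" using Suc by simp
    ultimately show ?thesis by (simp only: comp_def) (simp add: algebra_simps div_aux3)
  qed
  ultimately show ?thesis by (intro homog_eqI) simp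
qed

lemma homog_inv:
  assumes D: "qm_bound G f D" and x: "x \<in> carrier G"
  shows "homog G f (inv x) = - homog G f x"
proof (rule homog_eqI)
  let ?b = "\<lambda>n. f (x [^] Suc n) / real (Suc n)"
  let ?c = "\<lambda>n. f (inv x [^] Suc n) / real (Suc n)"
  have bound: "norm (?c n + ?b n) \<le> (\<bar>f \<one>\<bar> + D) * inverse (real (Suc n))" for n
  proof -
    have z: "x [^] Suc n \<in> carrier G" using x by blast
    have "\<bar>f (x [^] Suc n) + f (inv (x [^] Suc n)) - f (x [^] Suc n \<otimes> inv (x [^] Suc n))\<bar> \<le> D"
      using D z unfolding qm_bound_def by blast
    then have "\<bar>f (x [^] Suc n) + f (inv (x [^] Suc n))\<bar> \<le> \<bar>f \<one>\<bar> + D" using z by simp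
    moreover have "?c n + ?b n = (f (x [^] Suc n) + f (inv (x [^] Suc n))) * inverse (real (Suc n))"
      using x by (simp add: nat_pow_inv add_divide_distrib divide_inverse add.commute distrib_right)
    ultimately show ?thesis by (simp add: abs_mult)
  qed
  have "(\<lambda>n. ?c n + ?b n) \<longlonglongrightarrow> 0"
  proof (rule tendsto_0_le[OF LIMSEQ_inverse_real_of_nat])
    show "\<forall>\<^sub>F n in sequentially. norm (?c n + ?b n) \<le> norm (inverse (real (Suc n))) * (\<bar>f \<one>\<bar> + D)"
      using bound by (simp add: mult.commute)
  qed
  then have "(\<lambda>n. (?c n + ?b n) - ?b n) \<longlonglongrightarrow> 0 - homog G f x"
    by (intro tendsto_diff homog_LIMSEQ[OF D x])
  then show "?c \<longlonglongrightarrow> - homog G f x" by simp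
qed

lemma homog_pow_int:
  assumes D: "qm_bound G f D" and x: "x \<in> carrier G"
  shows "homog G f (x [^] (k::int)) = real_of_int k * homog G f x"
proof (cases "k \<ge> 0")
  case True
  then show ?thesis using homog_pow_nat[OF D x, of "nat k"] int_pow_int[of G x "nat k"] by simp
next
  case False
  then have k: "k = - int (nat (-k))" by simp
  have "x [^] k = inv (x [^] nat (-k))" using x k by (metis int_pow_neg_int)
  then have "homog G f (x [^] k) = - homog G f (x [^] nat (-k))"
    using homog_inv[OF D] x by simp
  then show ?thesis using homog_pow_nat[OF D x, of "nat (-k)"] False by simp
qed

lemma homog_qm:
  assumes D: "qm_bound G f D"
  shows "qm_bound G (homog G f) (4 * D)"
  unfolding qm_bound_def
proof (intro ballI)
  fix x y assume x: "x \<in> carrier G" and y: "y \<in> carrier G"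
  have "\<bar>f x + f y - f (x \<otimes> y)\<bar> \<le> D" using D x y unfolding qm_bound_def by blast
  moreover have "\<bar>homog G f x - f x\<bar> \<le> D" by (rule homog_close[OF D x])
  moreover have "\<bar>homog G f y - f y\<bar> \<le> D" by (rule homog_close[OF D y])
  moreover have "\<bar>homog G f (x \<otimes> y) - f (x \<otimes> y)\<bar> \<le> D" using x y by (intro homog_close[OF D]) auto
  ultimately show "\<bar>homog G f x + homog G f y - homog G f (x \<otimes> y)\<bar> \<le> 4 * D" by linarith
qed

lemma homog_in_hqm:
  assumes D: "qm_bound G f D"
  shows "homog G f \<in> homogeneous_qm G"
  unfolding homogeneous_qm_def quasimorphism_def
  using homog_qm[OF D] homog_pow_int[OF D] unfolding qm_bound_def by blast

end

type_synonym m2 = "real \<times> real \<times> real \<times> real"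

fun mmul :: "m2 \<Rightarrow> m2 \<Rightarrow> m2" where
  "mmul (p,q,r,s) (P,Q,R,S) = (p*P+q*R, p*Q+q*S, r*P+s*R, r*Q+s*S)"
fun det2 :: "m2 \<Rightarrow> real" where "det2 (p,q,r,s) = p*s - q*r"
fun mneg :: "m2 \<Rightarrow> m2" where "mneg (p,q,r,s) = (-p,-q,-r,-s)"
definition mI :: m2 where "mI = (1,0,0,1)"
fun canon :: "m2 \<Rightarrow> m2" where
  "canon (p,q,r,s) = (if 0 < p \<or> (p = 0 \<and> 0 < q) then (p,q,r,s) else (-p,-q,-r,-s))"
fun acoef :: "m2 \<Rightarrow> complex" where "acoef (p,q,r,s) = Complex ((p+s)/2) ((r-q)/2)"
fun bcoef :: "m2 \<Rightarrow> complex" where "bcoef (p,q,r,s) = Complex ((p-s)/2) ((q+r)/2)"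
definition om :: "m2 \<Rightarrow> m2 \<Rightarrow> real" where
  "om A B = Arg (acoef (mmul A B) / (acoef A * acoef B))"

lemma mmul_assoc: "mmul (mmul A B) C = mmul A (mmul B C)"
  by (cases A; cases B; cases C) (simp add: algebra_simps)
lemma det2_mmul: "det2 (mmul A B) = det2 A * det2 B"
  by (cases A; cases B) (simp add: algebra_simps)
lemma mmul_neg_left: "mmul (mneg A) B = mneg (mmul A B)"
  by (cases A; cases B) simp
lemma mmul_neg_right: "mmul A (mneg B) = mneg (mmul A B)"
  by (cases A; cases B) simp
lemma mneg_mneg[simp]: "mneg (mneg A) = A" by (cases A) simp
lemma det2_mneg[simp]: "det2 (mneg A) = det2 A" by (cases A) simp
lemma mmul_I_left[simp]: "mmul mI A = A" by (cases A) (simp add: mI_def)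
lemma mmul_I_right[simp]: "mmul A mI = A" by (cases A) (simp add: mI_def)
lemma det2_I[simp]: "det2 mI = 1" by (simp add: mI_def)
lemma canon_I[simp]: "canon mI = mI" by (simp add: mI_def)

lemma canon_cases: "canon A = A \<or> canon A = mneg A"
  by (cases A) auto
lemma det2_canon[simp]: "det2 (canon A) = det2 A"
  using canon_cases[of A] by auto
lemma canon_neg: "det2 A = 1 \<Longrightarrow> canon (mneg A) = canon A"
  by (cases A) (auto simp: not_less)
lemma canon_canon: "det2 A = 1 \<Longrightarrow> canon (canon A) = canon A"
  using canon_cases[of A] canon_neg[of A] by (metis det2_mneg mneg_mneg)
lemma canon_eq_neg: "det2 A = 1 \<Longrightarrow> canon A = canon B \<Longrightarrow> B = A \<or> B = mneg A"
  using canon_cases[of A] canon_cases[of B] by (cases A; cases B) (auto simp: not_less)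
lemma canon_mmul_left: "det2 A = 1 \<Longrightarrow> det2 B = 1 \<Longrightarrow> canon (mmul (canon A) B) = canon (mmul A B)"
  using canon_cases[of A] canon_neg[of "mmul A B"] by (auto simp: mmul_neg_left det2_mmul)
lemma canon_mmul_right: "det2 A = 1 \<Longrightarrow> det2 B = 1 \<Longrightarrow> canon (mmul A (canon B)) = canon (mmul A B)"
  using canon_cases[of B] canon_neg[of "mmul A B"] by (auto simp: mmul_neg_right det2_mmul)

lemma acoef_neg[simp]: "acoef (mneg A) = - acoef A" by (cases A) (auto simp: complex_eq_iff field_simps)
lemma acoef_I[simp]: "acoef mI = 1" by (simp add: mI_def complex_eq_iff)
lemma acoef_mmul: "acoef (mmul A B) = acoef A * acoef B + bcoef A * cnj (bcoef B)"
  by (cases A; cases B) (simp add: complex_eq_iff field_simps)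

lemma acoef_norm: "det2 A = 1 \<Longrightarrow> (cmod (acoef A))\<^sup>2 = (cmod (bcoef A))\<^sup>2 + 1"
  unfolding cmod_power2 by (cases A) (simp add: field_simps power2_eq_square)

lemma acoef_nz: "det2 A = 1 \<Longrightarrow> acoef A \<noteq> 0"
  using acoef_norm[of A] by (metis add_cancel_right_left norm_zero power_zero_numeral zero_le_power2 add_nonneg_pos zero_less_one less_irrefl)

lemma bcoef_lt: "det2 A = 1 \<Longrightarrow> cmod (bcoef A) < cmod (acoef A)"
proof -
  assume d: "det2 A = 1"
  have "(cmod (bcoef A))\<^sup>2 < (cmod (acoef A))\<^sup>2" using acoef_norm[OF d] by simp
  then show ?thesis by (simp add: power_less_imp_less_base)
qed

lemma Re_quot_pos:
  assumes A: "det2 A = 1" and B: "det2 B = 1"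
  shows "Re (acoef (mmul A B) / (acoef A * acoef B)) > 0"
proof -
  let ?a = "acoef A * acoef B"
  have nz: "?a \<noteq> 0" using acoef_nz[OF A] acoef_nz[OF B] by simp
  define u where "u = bcoef A * cnj (bcoef B) / ?a"
  have eq: "acoef (mmul A B) / ?a = 1 + u" using nz by (simp add: acoef_mmul u_def field_simps)
  have "cmod u = cmod (bcoef A) * cmod (bcoef B) / (cmod (acoef A) * cmod (acoef B))"
    by (simp add: u_def norm_mult norm_divide)
  also have "\<dots> < 1"
  proof -
    have "cmod (bcoef A) * cmod (bcoef B) < cmod (acoef A) * cmod (acoef B)"
      using bcoef_lt[OF A] bcoef_lt[OF B] by (simp add: mult_strict_mono')
    moreover have "0 < cmod (acoef A) * cmod (acoef B)" using nz by (simp add: norm_mult[symmetric])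
    ultimately show ?thesis by simp
  qed
  finally have "cmod u < 1" .
  moreover have "- cmod u \<le> Re u" using abs_Re_le_cmod[of u] by linarith
  ultimately show ?thesis using eq by simp
qed

lemma Arg_Re_pos: assumes "Re z > 0" shows "\<bar>Arg z\<bar> < pi/2"
proof -
  have z: "z \<noteq> 0" using assms by auto
  have c: "cos (Arg z) > 0" using assms z by (simp add: cos_Arg)
  have b: "- pi < Arg z" "Arg z \<le> pi" using Arg_bounded[of z] by auto
  show ?thesis
  proof (rule ccontr)
    assume "\<not> \<bar>Arg z\<bar> < pi/2"
    then consider "Arg z \<ge> pi/2" | "Arg z \<le> - (pi/2)" by linarith
    then show False
    proof cases
      case 1
      have "0 \<le> cos (pi - Arg z)" using 1 b by (intro cos_ge_zero) auto
      then show False using c by simp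
    next
      case 2
      have "0 \<le> cos (pi + Arg z)" using 2 b by (intro cos_ge_zero) auto
      then show False using c by (simp add: cos_add)
    qed
  qed
qed

lemma Arg_one[simp]: "Arg 1 = 0"
  by (rule cis_Arg_unique) auto

lemma om_bound: "det2 A = 1 \<Longrightarrow> det2 B = 1 \<Longrightarrow> \<bar>om A B\<bar> < pi/2"
  unfolding om_def by (intro Arg_Re_pos Re_quot_pos)

lemma om_neg_left[simp]: "om (mneg A) B = om A B"
  by (simp add: om_def mmul_neg_left)
lemma om_neg_right[simp]: "om A (mneg B) = om A B"
  by (simp add: om_def mmul_neg_right)
lemma om_canon_left[simp]: "om (canon A) B = om A B"
  using canon_cases[of A] by auto
lemma om_canon_right[simp]: "om A (canon B) = om A B"
  using canon_cases[of B] by auto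
lemma om_I_left[simp]: "det2 A = 1 \<Longrightarrow> om mI A = 0"
  using acoef_nz[of A] by (simp add: om_def)

lemma sgn_cis_Arg: "z \<noteq> 0 \<Longrightarrow> sgn z = cis (Arg z)"
  by (simp add: cis_Arg)

lemma Arg_mult_sum:
  assumes "z \<noteq> 0" "w \<noteq> 0" "- pi < Arg z + Arg w" "Arg z + Arg w \<le> pi"
  shows "Arg (z * w) = Arg z + Arg w"
proof (rule cis_Arg_unique)
  show "sgn (z * w) = cis (Arg z + Arg w)"
    using assms by (simp add: sgn_mult sgn_cis_Arg cis_mult)
qed (use assms in auto)

lemma Arg_quot3:
  assumes "z \<noteq> 0" "w \<noteq> 0" "v \<noteq> 0" "- pi < Arg z - Arg w - Arg v" "Arg z - Arg w - Arg v \<le> pi"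
  shows "Arg (z / (w * v)) = Arg z - Arg w - Arg v"
proof (rule cis_Arg_unique)
  have "sgn (z / (w * v)) = sgn z / (sgn w * sgn v)"
    using assms by (simp add: sgn_eq norm_mult norm_divide field_simps)
  then show "sgn (z / (w * v)) = cis (Arg z - Arg w - Arg v)"
    using assms by (simp add: sgn_cis_Arg cis_mult cis_divide diff_diff_eq)
qed (use assms in auto)

lemma om_cocycle:
  assumes A: "det2 A = 1" and B: "det2 B = 1" and C: "det2 C = 1"
  shows "om A B + om (mmul A B) C = om B C + om A (mmul B C)"
proof -
  have AB: "det2 (mmul A B) = 1" and BC: "det2 (mmul B C) = 1"
    using A B C by (simp_all add: det2_mmul)
  define z1 where "z1 = acoef (mmul A B) / (acoef A * acoef B)"
  define z2 where "z2 = acoef (mmul (mmul A B) C) / (acoef (mmul A B) * acoef C)"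
  define z3 where "z3 = acoef (mmul B C) / (acoef B * acoef C)"
  define z4 where "z4 = acoef (mmul A (mmul B C)) / (acoef A * acoef (mmul B C))"
  have nz: "acoef A \<noteq> 0" "acoef B \<noteq> 0" "acoef C \<noteq> 0" "acoef (mmul A B) \<noteq> 0" "acoef (mmul B C) \<noteq> 0"
    using acoef_nz A B C AB BC by auto
  have "z1 * z2 = z3 * z4"
    using nz by (simp add: z1_def z2_def z3_def z4_def mmul_assoc field_simps)
  have b1: "\<bar>Arg z1\<bar> < pi/2" unfolding z1_def by (intro Arg_Re_pos Re_quot_pos A B)
  have b2: "\<bar>Arg z2\<bar> < pi/2" unfolding z2_def by (intro Arg_Re_pos Re_quot_pos AB C)
  have b3: "\<bar>Arg z3\<bar> < pi/2" unfolding z3_def by (intro Arg_Re_pos Re_quot_pos B C)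
  have b4: "\<bar>Arg z4\<bar> < pi/2" unfolding z4_def by (intro Arg_Re_pos Re_quot_pos A BC)
  have nzz: "z1 \<noteq> 0" "z2 \<noteq> 0" "z3 \<noteq> 0" "z4 \<noteq> 0"
    using nz by (simp_all add: z1_def z2_def z3_def z4_def acoef_nz AB BC A B C det2_mmul)
  have "Arg (z1 * z2) = Arg z1 + Arg z2" using b1 b2 nzz by (intro Arg_mult_sum) auto
  moreover have "Arg (z3 * z4) = Arg z3 + Arg z4" using b3 b4 nzz by (intro Arg_mult_sum) auto
  ultimately have "Arg z1 + Arg z2 = Arg z3 + Arg z4" using \<open>z1 * z2 = z3 * z4\<close> by simp
  then show ?thesis by (simp add: om_def z1_def z2_def z3_def z4_def)
qed

definition Hgrp :: "(m2 \<times> real) monoid" where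
  "Hgrp = \<lparr> carrier = {x. det2 (fst x) = 1 \<and> canon (fst x) = fst x},
            monoid.mult = (\<lambda>x y. (canon (mmul (fst x) (fst y)), snd x + snd y + om (fst x) (fst y))),
            one = (mI, 0) \<rparr>"

lemma Hgrp_carrier: "x \<in> carrier Hgrp \<longleftrightarrow> det2 (fst x) = 1 \<and> canon (fst x) = fst x"
  by (simp add: Hgrp_def)
lemma Hgrp_mult: "x \<otimes>\<^bsub>Hgrp\<^esub> y = (canon (mmul (fst x) (fst y)), snd x + snd y + om (fst x) (fst y))"
  by (simp add: Hgrp_def)
lemma Hgrp_one: "\<one>\<^bsub>Hgrp\<^esub> = (mI, 0)"
  by (simp add: Hgrp_def)

fun madj :: "m2 \<Rightarrow> m2" where "madj (p,q,r,s) = (s,-q,-r,p)"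
lemma madj_mul: "det2 A = 1 \<Longrightarrow> mmul (madj A) A = mI"
  by (cases A) (simp add: mI_def algebra_simps)
lemma det2_madj[simp]: "det2 (madj A) = det2 A"
  by (cases A) (simp add: algebra_simps)

lemma Hgrp_group: "group Hgrp"
proof (rule groupI)
  show "x \<otimes>\<^bsub>Hgrp\<^esub> y \<in> carrier Hgrp" if "x \<in> carrier Hgrp" "y \<in> carrier Hgrp" for x y
    using that by (simp add: Hgrp_carrier Hgrp_mult det2_mmul canon_canon)
  show "\<one>\<^bsub>Hgrp\<^esub> \<in> carrier Hgrp" by (simp add: Hgrp_carrier Hgrp_one)
  show "x \<otimes>\<^bsub>Hgrp\<^esub> y \<otimes>\<^bsub>Hgrp\<^esub> z = x \<otimes>\<^bsub>Hgrp\<^esub> (y \<otimes>\<^bsub>Hgrp\<^esub> z)"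
    if "x \<in> carrier Hgrp" "y \<in> carrier Hgrp" "z \<in> carrier Hgrp" for x y z
  proof -
    have d: "det2 (fst x) = 1" "det2 (fst y) = 1" "det2 (fst z) = 1"
      using that by (auto simp: Hgrp_carrier)
    have c: "om (fst x) (fst y) + om (mmul (fst x) (fst y)) (fst z)
           = om (fst y) (fst z) + om (fst x) (mmul (fst y) (fst z))"
      by (rule om_cocycle[OF d])
    show ?thesis using d c
      by (simp add: Hgrp_mult canon_mmul_left canon_mmul_right det2_mmul mmul_assoc algebra_simps)
  qed
  show "\<one>\<^bsub>Hgrp\<^esub> \<otimes>\<^bsub>Hgrp\<^esub> x = x" if "x \<in> carrier Hgrp" for x
    using that by (cases x) (simp add: Hgrp_carrier Hgrp_mult Hgrp_one)
  show "\<exists>y\<in>carrier Hgrp. y \<otimes>\<^bsub>Hgrp\<^esub> x = \<one>\<^bsub>Hgrp\<^esub>" if "x \<in> carrier Hgrp" for x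
  proof
    have d: "det2 (fst x) = 1" using that by (simp add: Hgrp_carrier)
    let ?y = "(canon (madj (fst x)), - snd x - om (madj (fst x)) (fst x))"
    show "?y \<in> carrier Hgrp" using d by (simp add: Hgrp_carrier canon_canon)
    show "?y \<otimes>\<^bsub>Hgrp\<^esub> x = \<one>\<^bsub>Hgrp\<^esub>"
      using d by (simp add: Hgrp_mult Hgrp_one canon_mmul_left madj_mul)
  qed
qed

lemma Hgrp_pow:
  "x [^]\<^bsub>Hgrp\<^esub> (n::nat) = (fst ((fst x, 0) [^]\<^bsub>Hgrp\<^esub> n), real n * snd x + snd ((fst x, 0::real) [^]\<^bsub>Hgrp\<^esub> n))"
proof (induction n)
  case 0 then show ?case by (simp add: Hgrp_one)
next
  case (Suc n)
  show ?case
    by (simp only: nat_pow_Suc Suc.IH) (simp add: Hgrp_mult algebra_simps)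
qed

fun mpow :: "m2 \<Rightarrow> nat \<Rightarrow> m2" where
  "mpow M 0 = mI"
| "mpow M (Suc n) = mmul (mpow M n) M"

lemma det2_mpow: "det2 M = 1 \<Longrightarrow> det2 (mpow M n) = 1"
  by (induction n) (auto simp: det2_mmul)

lemma Hgrp_pow_fst: "det2 M = 1 \<Longrightarrow> fst ((M, t) [^]\<^bsub>Hgrp\<^esub> n) = canon (mpow M n)"
proof (induction n)
  case 0 then show ?case by (simp add: Hgrp_one)
next
  case (Suc n)
  then show ?case
    by (simp add: nat_pow_Suc Hgrp_mult canon_mmul_left det2_mpow)
qed

lemma mpow_neg: "mpow (mneg B) n = mpow B n \<or> mpow (mneg B) n = mneg (mpow B n)"
  by (induction n) (auto simp: mmul_neg_left mmul_neg_right)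

lemma mpow_canon: "det2 B = 1 \<Longrightarrow> canon (mpow (canon B) n) = canon (mpow B n)"
  using canon_cases[of B] mpow_neg[of B n] canon_neg[OF det2_mpow[of B n]] by auto

fun mk :: "m2 \<Rightarrow> real \<Rightarrow> real \<Rightarrow> m2" where
  "mk (n1,n2,n3,n4) x y = (x + y*n1, y*n2, y*n3, x + y*n4)"
fun tr2 :: "m2 \<Rightarrow> real" where "tr2 (p,q,r,s) = p + s"

lemma mk_mul: "tr2 N = 0 \<Longrightarrow> mmul (mk N x y) (mk N x' y') = mk N (x*x' - det2 N * y*y') (x*y' + x'*y)"
  by (cases N) (simp add: algebra_simps eq_neg_iff_add_eq_0[symmetric])

lemma mk_det: "tr2 N = 0 \<Longrightarrow> det2 (mk N x y) = x^2 + det2 N * y^2"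
  by (cases N) (simp add: algebra_simps power2_eq_square eq_neg_iff_add_eq_0[symmetric])

lemma mk_I: "mk N 1 0 = mI" by (cases N) (simp add: mI_def)

lemma mk_pow:
  fixes c s :: "real \<Rightarrow> real"
  assumes N: "tr2 N = 0" and c0: "c 0 = 1" and s0: "s 0 = 0"
    and cadd: "\<And>a b. c (a+b) = c a * c b - det2 N * s a * s b"
    and sadd: "\<And>a b. s (a+b) = c a * s b + s a * c b"
  shows "mpow (mk N (c u) (s u)) n = mk N (c (real n * u)) (s (real n * u))"
proof (induction n)
  case 0 then show ?case by (simp add: c0 s0 mk_I)
next
  case (Suc n)
  have "c (real (Suc n) * u) = c (real n * u + u)" "s (real (Suc n) * u) = s (real n * u + u)"
    by (simp_all add: algebra_simps)
  then show ?case using Suc by (simp add: mk_mul[OF N] cadd sadd algebra_simps)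
qed

lemma root_from_mk:
  fixes c s :: "real \<Rightarrow> real"
  assumes N: "tr2 N = 0" and c0: "c 0 = 1" and s0: "s 0 = 0"
    and cadd: "\<And>a b. c (a+b) = c a * c b - det2 N * s a * s b"
    and sadd: "\<And>a b. s (a+b) = c a * s b + s a * c b"
    and one: "\<And>a. (c a)^2 + det2 N * (s a)^2 = 1"
    and n: "n \<ge> 1" and A: "A = mk N (c u) (s u)"
  shows "\<exists>B. det2 B = 1 \<and> mpow B n = A"
proof (intro exI conjI)
  show "det2 (mk N (c (u / real n)) (s (u / real n))) = 1" by (simp add: mk_det[OF N] one)
  show "mpow (mk N (c (u / real n)) (s (u / real n))) n = A"
    using n by (simp add: mk_pow[OF N c0 s0 cadd sadd] A)
qed

fun mscale :: "real \<Rightarrow> m2 \<Rightarrow> m2" where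
  "mscale k (p,q,r,s) = (k*p, k*q, k*r, k*s)"

lemma sl2_root_pos:
  assumes A: "det2 A = 1" and tr: "tr2 A \<ge> 0" and n: "n \<ge> 1"
  shows "\<exists>B. det2 B = 1 \<and> mpow B n = A"
proof -
  obtain p q r s where Ae: "A = (p,q,r,s)" by (cases A) auto
  define t where "t = (p + s) / 2"
  have t0: "t \<ge> 0" using tr by (simp add: Ae t_def)
  define N0 where "N0 = (p - t, q, r, s - t)"
  have trN0: "tr2 N0 = 0" by (simp add: N0_def t_def)
  have detN0: "det2 N0 = 1 - t^2"
    using A by (simp add: N0_def Ae t_def power2_eq_square field_simps)
  consider "t < 1" | "t > 1" | "t = 1" by linarith
  then show ?thesis
  proof cases
    case 1
    define \<sigma> where "\<sigma> = sqrt (1 - t^2)"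
    have "t * t \<le> 1 * t" using 1 t0 by (intro mult_right_mono) auto
    then have tt: "t^2 < 1" using 1 by (simp add: power2_eq_square)
    have sp: "\<sigma> > 0" using tt by (simp add: \<sigma>_def)
    have sq: "\<sigma>^2 = 1 - t^2" using tt by (simp add: \<sigma>_def)
    define N where "N = mscale (1/\<sigma>) N0"
    have trN: "tr2 N = 0" using trN0 by (simp add: N_def N0_def add_divide_distrib[symmetric])
    have detN: "det2 N = 1"
    proof -
      have "det2 N = det2 N0 / \<sigma>^2" using sp by (simp add: N_def N0_def power2_eq_square field_simps)
      then show ?thesis using detN0 sq sp tt by simp
    qed
    have ct: "cos (arccos t) = t" using 1 t0 by simp
    have st: "sin (arccos t) = \<sigma>" using 1 t0 by (simp add: sin_arccos_abs \<sigma>_def)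
    have Aeq: "A = mk N (cos (arccos t)) (sin (arccos t))"
      using sp by (simp add: ct st Ae N_def N0_def)
    show ?thesis
      by (rule root_from_mk[where c=cos and s=sin and u="arccos t", OF trN _ _ _ _ _ n Aeq])
         (simp_all add: detN cos_add sin_add algebra_simps)
  next
    case 2
    define \<sigma> where "\<sigma> = sqrt (t^2 - 1)"
    have "1 * t \<le> t * t" using 2 by (intro mult_right_mono) auto
    then have t1: "1 < t^2" using 2 unfolding power2_eq_square by linarith
    have sp: "\<sigma> > 0" using t1 by (simp add: \<sigma>_def)
    have sq: "\<sigma>^2 = t^2 - 1" using t1 by (simp add: \<sigma>_def)
    define N where "N = mscale (1/\<sigma>) N0"
    have trN: "tr2 N = 0" using trN0 by (simp add: N_def N0_def add_divide_distrib[symmetric])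
    have detN: "det2 N = -1"
    proof -
      have "det2 N = det2 N0 / \<sigma>^2" using sp by (simp add: N_def N0_def power2_eq_square field_simps)
      moreover have "(1 - t^2) / (t^2 - 1) = -1" using t1 by (simp add: field_simps)
      ultimately show ?thesis using detN0 sq by simp
    qed
    have ct: "cosh (arcosh t) = t" using 2 by simp
    have st: "sinh (arcosh t) = \<sigma>" using 2 by (simp add: sinh_arcosh_real \<sigma>_def)
    have Aeq: "A = mk N (cosh (arcosh t)) (sinh (arcosh t))"
      using sp by (simp add: ct st Ae N_def N0_def)
    show ?thesis
      by (rule root_from_mk[where c=cosh and s=sinh and u="arcosh t", OF trN _ _ _ _ _ n Aeq])
         (simp_all add: detN cosh_add sinh_add algebra_simps cosh_square_eq)
  next
    case 3
    have detN: "det2 N0 = 0" using detN0 3 by simp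
    have Aeq: "A = mk N0 ((\<lambda>_. 1) (1::real)) ((\<lambda>x. x) 1)"
      using 3 by (simp add: Ae N0_def t_def)
    show ?thesis
      by (rule root_from_mk[where c="\<lambda>_. 1" and s="\<lambda>x. x" and u=1, OF trN0 _ _ _ _ _ n Aeq]) (simp_all add: detN)
  qed
qed

lemma sl2_root:
  assumes A: "det2 A = 1" and n: "n \<ge> 1"
  shows "\<exists>B. det2 B = 1 \<and> (mpow B n = A \<or> mpow B n = mneg A)"
proof (cases "tr2 A \<ge> 0")
  case True then show ?thesis using sl2_root_pos[OF A True n] by blast
next
  case False
  have "tr2 (mneg A) \<ge> 0" using False by (cases A) simp
  then show ?thesis using sl2_root_pos[of "mneg A" n] A n by auto
qed

lemma Hgrp_divisible: "divisible_grp Hgrp"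
  unfolding divisible_grp_def
proof (intro ballI allI impI)
  fix x and n :: nat assume x: "x \<in> carrier Hgrp" and n: "n \<ge> 1"
  obtain A s where xe: "x = (A, s)" by (cases x) auto
  have A: "det2 A = 1" "canon A = A" using x xe by (auto simp: Hgrp_carrier)
  obtain B where B: "det2 B = 1" "mpow B n = A \<or> mpow B n = mneg A" using sl2_root[OF A(1) n] by blast
  define t where "t = (s - snd ((canon B, 0::real) [^]\<^bsub>Hgrp\<^esub> n)) / real n"
  let ?y = "(canon B, t)"
  show "\<exists>y\<in>carrier Hgrp. y [^]\<^bsub>Hgrp\<^esub> n = x"
  proof (intro bexI)
    show "?y \<in> carrier Hgrp" using B by (simp add: Hgrp_carrier canon_canon)
    have f: "fst ((canon B, 0::real) [^]\<^bsub>Hgrp\<^esub> n) = A"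
      using B A by (auto simp: Hgrp_pow_fst mpow_canon canon_neg)
    show "?y [^]\<^bsub>Hgrp\<^esub> n = x"
      using n by (subst Hgrp_pow) (simp add: f xe t_def)
  qed
qed

lemma Hgrp_qm: "qm_bound Hgrp snd (pi/2)"
  unfolding qm_bound_def
proof (intro ballI)
  fix x y assume "x \<in> carrier Hgrp" "y \<in> carrier Hgrp"
  then have "\<bar>om (fst x) (fst y)\<bar> < pi/2" by (intro om_bound) (auto simp: Hgrp_carrier)
  then show "\<bar>snd x + snd y - snd (x \<otimes>\<^bsub>Hgrp\<^esub> y)\<bar> \<le> pi/2" by (simp add: Hgrp_mult)
qed

lemma Arg_neg: assumes "Im z < 0" shows "Arg z < 0"
proof (rule ccontr)
  assume "\<not> Arg z < 0"
  then have "0 \<le> Arg z" "Arg z \<le> pi" using Arg_bounded[of z] by auto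
  then have "0 \<le> sin (Arg z)" by (rule sin_ge_zero)
  moreover have "z \<noteq> 0" using assms by auto
  moreover have "cmod z > 0" using \<open>z \<noteq> 0\<close> by simp
  ultimately show False using assms by (auto simp: sin_Arg zero_le_divide_iff)
qed

lemma Arg_pos_real: "r > 0 \<Longrightarrow> Arg (complex_of_real r) = 0"
  by (rule cis_Arg_unique) (auto simp: sgn_of_real)

definition "Sm = ((0::real), (1::real), (-1::real), (0::real))"
definition "Um = ((0::real), (1::real), (-1::real), (-1::real))"
definition "Vm = ((1::real), (1::real), (-1::real), (0::real))"
definition "Tm = ((1::real), (1::real), (0::real), (1::real))"
definition Tn :: "nat \<Rightarrow> m2" where "Tn k = (1, real k, 0, 1)"

definition "xH = (Sm, (0::real))"
definition "yH = (Um, (0::real))"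

lemma xH_carrier: "xH \<in> carrier Hgrp" by (simp add: xH_def Sm_def Hgrp_carrier)
lemma yH_carrier: "yH \<in> carrier Hgrp" by (simp add: yH_def Um_def Hgrp_carrier)

lemma om_SS: "om Sm Sm = 0"
proof -
  have "acoef (mmul Sm Sm) / (acoef Sm * acoef Sm) = 1" by (simp add: Sm_def complex_eq_iff Re_divide Im_divide)
  then show ?thesis by (simp add: om_def)
qed

lemma om_SU: "om Sm Um = 0"
proof -
  have "acoef (mmul Sm Um) / (acoef Sm * acoef Um) = 1" by (simp add: Sm_def Um_def complex_eq_iff Re_divide Im_divide power2_eq_square)
  then show ?thesis by (simp add: om_def)
qed

lemma om_VU: "om Vm Um = 0"
proof -
  have q: "acoef (mmul Vm Um) / (acoef Vm * acoef Um) = complex_of_real (4/5)"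
    by (simp add: Vm_def Um_def complex_eq_iff Re_divide Im_divide power2_eq_square)
  show ?thesis unfolding om_def q by (rule Arg_pos_real) simp
qed

lemma om_UU: "om Um Um < 0"
proof -
  have "Im (acoef (mmul Um Um) / (acoef Um * acoef Um)) < 0"
    by (simp add: Um_def Im_divide power2_eq_square)
  then show ?thesis unfolding om_def by (rule Arg_neg)
qed

lemma xx: "xH \<otimes>\<^bsub>Hgrp\<^esub> xH = \<one>\<^bsub>Hgrp\<^esub>"
  by (simp add: xH_def Hgrp_mult Hgrp_one om_SS) (simp add: Sm_def mI_def)

lemma xy: "xH \<otimes>\<^bsub>Hgrp\<^esub> yH = (Tm, 0)"
  by (simp add: xH_def yH_def Hgrp_mult om_SU) (simp add: Sm_def Um_def Tm_def)

lemma yyy: "yH [^]\<^bsub>Hgrp\<^esub> (3::nat) = (mI, om Um Um + om Vm Um)"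
proof -
  have c1: "canon (mmul Um Um) = Vm" by (simp add: Um_def Vm_def)
  have c2: "canon (mmul Vm Um) = mI" by (simp add: Um_def Vm_def mI_def)
  have dU: "det2 Um = 1" by (simp add: Um_def)
  have cU: "canon Um = Um" by (simp add: Um_def)
  have om_m: "om (mmul Um Um) Um = om Vm Um" using om_canon_left[of "mmul Um Um" Um] c1 by simp
  show ?thesis
    by (simp add: numeral_3_eq_3 nat_pow_Suc yH_def Hgrp_mult Hgrp_one dU cU c1 c2 om_m)
qed

lemma Hgrp_one_pow: "(mI, 0::real) [^]\<^bsub>Hgrp\<^esub> (n::nat) = (mI, 0)"
  using monoid.nat_pow_one[OF group.is_monoid[OF Hgrp_group], of n] by (simp add: Hgrp_one)

lemma homog_central: "homog Hgrp snd (mI, c) = c"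
proof (rule group.homog_eqI[OF Hgrp_group])
  have "(mI, c) [^]\<^bsub>Hgrp\<^esub> (Suc n) = (mI, real (Suc n) * c)" for n
    by (subst Hgrp_pow) (simp add: Hgrp_one_pow)
  then show "(\<lambda>n. snd ((mI, c) [^]\<^bsub>Hgrp\<^esub> Suc n) / real (Suc n)) \<longlonglongrightarrow> c"
    by simp
qed

lemma homog_y: "homog Hgrp snd yH = (om Um Um + om Vm Um) / 3"
  using group.homog_pow_nat[OF Hgrp_group Hgrp_qm yH_carrier, of 3] yyy homog_central by simp

lemma homog_x: "homog Hgrp snd xH = 0"
proof -
  have "xH [^]\<^bsub>Hgrp\<^esub> (2::nat) = \<one>\<^bsub>Hgrp\<^esub>"
    using xx xH_carrier group.is_monoid[OF Hgrp_group]
    by (simp add: numeral_2_eq_2 nat_pow_Suc monoid.l_one)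
  then show ?thesis
    using group.homog_pow_nat[OF Hgrp_group Hgrp_qm xH_carrier, of 2] group.homog_one[OF Hgrp_group]
    by simp
qed

lemma acoef_Tn: "acoef (Tn k) = Complex 1 (- real k / 2)" by (simp add: Tn_def)

lemma ArgT_bounds: "k \<ge> 1 \<Longrightarrow> - (pi/2) < Arg (acoef (Tn k)) \<and> Arg (acoef (Tn k)) < 0"
proof -
  assume k: "k \<ge> 1"
  have "\<bar>Arg (acoef (Tn k))\<bar> < pi/2" by (rule Arg_Re_pos) (simp add: acoef_Tn)
  moreover have "Arg (acoef (Tn k)) < 0" by (rule Arg_neg) (use k in \<open>simp add: acoef_Tn\<close>)
  ultimately show ?thesis by linarith
qed

lemma Tn_1: "Tn 1 = Tm" by (simp add: Tn_def Tm_def)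
lemma Tn_mul: "mmul (Tn k) Tm = Tn (Suc k)" by (simp add: Tn_def Tm_def)
lemma Tn_canon: "canon (Tn k) = Tn k" by (simp add: Tn_def)
lemma Tn_det: "det2 (Tn k) = 1" by (simp add: Tn_def)

lemma om_Tn: "k \<ge> 1 \<Longrightarrow> om (Tn k) Tm = Arg (acoef (Tn (Suc k))) - Arg (acoef (Tn k)) - Arg (acoef (Tn 1))"
proof -
  assume k: "k \<ge> 1"
  have b1: "- (pi/2) < Arg (acoef (Tn (Suc k)))" "Arg (acoef (Tn (Suc k))) < 0" using ArgT_bounds[of "Suc k"] by auto
  have b2: "- (pi/2) < Arg (acoef (Tn k))" "Arg (acoef (Tn k)) < 0" using ArgT_bounds[OF k] by auto
  have b3: "- (pi/2) < Arg (acoef (Tn 1))" "Arg (acoef (Tn 1)) < 0" using ArgT_bounds[of 1] by auto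
  have nz: "acoef (Tn j) \<noteq> 0" for j by (simp add: acoef_Tn complex_eq_iff)
  show ?thesis unfolding om_def Tn_mul
    by (subst Tn_1[symmetric], rule Arg_quot3) (use nz b1 b2 b3 in auto)
qed

lemma Tpow: "(Tm, 0::real) [^]\<^bsub>Hgrp\<^esub> (Suc n) = (Tn (Suc n), Arg (acoef (Tn (Suc n))) - real (Suc n) * Arg (acoef Tm))"
proof (induction n)
  case 0
  have "det2 Tm = 1" by (simp add: Tm_def)
  then show ?case by (simp add: nat_pow_Suc Hgrp_one Hgrp_mult Tn_1) (simp add: Tm_def Tn_def)
next
  case (Suc n)
  have "(Tm, 0::real) [^]\<^bsub>Hgrp\<^esub> (Suc (Suc n)) = (Tm, 0::real) [^]\<^bsub>Hgrp\<^esub> (Suc n) \<otimes>\<^bsub>Hgrp\<^esub> (Tm, 0)"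
    by (simp only: nat_pow_Suc)
  also have "\<dots> = (Tn (Suc (Suc n)), Arg (acoef (Tn (Suc n))) - real (Suc n) * Arg (acoef Tm) + om (Tn (Suc n)) Tm)"
    by (simp add: Suc Hgrp_mult Tn_mul Tn_canon)
  also have "\<dots> = (Tn (Suc (Suc n)), Arg (acoef (Tn (Suc (Suc n)))) - real (Suc (Suc n)) * Arg (acoef Tm))"
    using Tn_1 by (simp add: om_Tn algebra_simps)
  finally show ?case .
qed

lemma homog_T: "homog Hgrp snd (Tm, 0) = - Arg (acoef Tm)"
proof (rule group.homog_eqI[OF Hgrp_group])
  let ?A = "\<lambda>n. Arg (acoef (Tn (Suc n)))"
  have "(\<lambda>n. ?A n / real (Suc n)) \<longlonglongrightarrow> 0"
  proof (rule tendsto_0_le[OF LIMSEQ_inverse_real_of_nat])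
    have "norm (?A n / real (Suc n)) \<le> norm (inverse (real (Suc n))) * pi" for n
    proof -
      have "\<bar>?A n\<bar> \<le> pi" using Arg_bounded[of "acoef (Tn (Suc n))"] by auto
      then show ?thesis by (simp add: divide_inverse abs_mult mult.commute mult_left_mono)
    qed
    then show "\<forall>\<^sub>F n in sequentially. norm (?A n / real (Suc n)) \<le> norm (inverse (real (Suc n))) * pi"
      by simp
  qed
  then have "(\<lambda>n. ?A n / real (Suc n) - Arg (acoef Tm)) \<longlonglongrightarrow> 0 - Arg (acoef Tm)"
    by (intro tendsto_diff tendsto_const)
  moreover have "snd ((Tm, 0::real) [^]\<^bsub>Hgrp\<^esub> Suc n) / real (Suc n) = ?A n / real (Suc n) - Arg (acoef Tm)" for n
    by (simp add: Tpow diff_divide_distrib)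
  ultimately show "(\<lambda>n. snd ((Tm, 0::real) [^]\<^bsub>Hgrp\<^esub> Suc n) / real (Suc n)) \<longlonglongrightarrow> - Arg (acoef Tm)"
    by simp
qed

definition "dH = homog Hgrp snd (xH \<otimes>\<^bsub>Hgrp\<^esub> yH) - homog Hgrp snd xH - homog Hgrp snd yH"

lemma dH_pos: "dH > 0"
proof -
  have "Arg (acoef Tm) < 0" using ArgT_bounds[of 1] Tn_1 by auto
  then show ?thesis
    using om_UU om_VU by (simp add: dH_def xy homog_T homog_x homog_y)
qed

theorem theoremA:
  shows "\<exists>G :: nat monoid. group G \<and> countable (carrier G) \<and>
     (\<forall>m\<ge>1. \<forall>w\<in>carrier (free_group m) - commutator_subgroup_free m.
        word_map_surjective G m w) \<and>
     \<not> qm_quotient_finite_dim G"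
proof -
  let ?H = Hgrp
  let ?U = "fsum Hgrp"
  have H: "group ?H" by (rule Hgrp_group)
  have U: "group ?U" by (rule fsum_group[OF H])
  have dU: "divisible_grp ?U" by (rule fsum_divisible[OF H Hgrp_divisible])
  define X0 where "X0 = range (\<lambda>k. ek Hgrp k xH) \<union> range (\<lambda>k. ek Hgrp k yH)"
  have X0: "countable X0" "X0 \<subseteq> carrier ?U"
    using ek_carrier[OF xH_carrier H] ek_carrier[OF yH_carrier H] by (auto simp: X0_def)
  obtain S where S: "subgroup S ?U" "countable S" "X0 \<subseteq> S"
    and roots: "\<forall>x\<in>S. \<forall>n::nat. n \<ge> 1 \<longrightarrow> (\<exists>y\<in>S. y [^]\<^bsub>?U\<^esub> n = x)"
    using countable_root_closure[OF U dU X0] by blast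
  obtain G :: "nat monoid" and fr where G: "group G" and hom: "fr \<in> hom G ?U"
    and img: "fr ` carrier G = S" and inj: "inj_on fr (carrier G)"
    using transport_nat[OF U S(1) S(2)] by blast
  interpret G: group G by (rule G)
  interpret gh: group_hom G ?U fr
    using G U hom by (simp add: group_hom_def group_hom_axioms_def)
  have frc: "a \<in> carrier G \<Longrightarrow> fr a \<in> carrier ?U" for a using hom by (auto simp: hom_def)
  have dG: "divisible_grp G"
    unfolding divisible_grp_def
  proof (intro ballI allI impI)
    fix h and n :: nat assume h: "h \<in> carrier G" and n: "n \<ge> 1"
    have "fr h \<in> S" using h img by auto
    then obtain y where y: "y \<in> S" "y [^]\<^bsub>?U\<^esub> n = fr h" using roots n by blast
    then obtain a where a: "a \<in> carrier G" "fr a = y" using img by auto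
    have "fr (a [^]\<^bsub>G\<^esub> n) = fr h" using a y gh.hom_nat_pow by simp
    then have "a [^]\<^bsub>G\<^esub> n = h" using inj h a by (meson G.nat_pow_closed inj_onD)
    then show "\<exists>y\<in>carrier G. y [^]\<^bsub>G\<^esub> n = h" using a by blast
  qed
  define psi where "psi j a = homog Hgrp snd (fr a j)" for j a
  have projc: "a \<in> carrier G \<Longrightarrow> fr a j \<in> carrier ?H" for a j
    using frc by (auto simp: fsum_carrier)
  have hq: "qm_bound ?H (homog ?H snd) (4 * (pi/2))" by (rule group.homog_qm[OF H Hgrp_qm])
  have psi_hqm: "psi j \<in> homogeneous_qm G" for j
    unfolding homogeneous_qm_def quasimorphism_def
  proof (intro CollectI conjI exI ballI allI)
    fix a b assume a: "a \<in> carrier G" and b: "b \<in> carrier G"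
    have "fr (a \<otimes>\<^bsub>G\<^esub> b) j = fr a j \<otimes>\<^bsub>?H\<^esub> fr b j" using a b by (simp add: fsum_mult)
    then show "\<bar>psi j a + psi j b - psi j (a \<otimes>\<^bsub>G\<^esub> b)\<bar> \<le> 4 * (pi/2)"
      using hq projc[OF a] projc[OF b] unfolding qm_bound_def psi_def by simp
  next
    fix a and k :: int assume a: "a \<in> carrier G"
    interpret pj: group_hom ?U ?H "\<lambda>u. u j" by (rule fsum_proj_hom[OF H])
    have "fr (a [^]\<^bsub>G\<^esub> k) j = (fr a j) [^]\<^bsub>?H\<^esub> k"
      using a frc[OF a] gh.hom_int_pow pj.hom_int_pow by simp
    then show "psi j (a [^]\<^bsub>G\<^esub> k) = real_of_int k * psi j a"
      using group.homog_pow_int[OF H Hgrp_qm projc[OF a]] unfolding psi_def by simp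
  qed
  define p where "p k = inv_into (carrier G) fr (ek Hgrp k xH)" for k
  define q where "q k = inv_into (carrier G) fr (ek Hgrp k yH)" for k
  have xs: "ek Hgrp k xH \<in> fr ` carrier G" "ek Hgrp k yH \<in> fr ` carrier G" for k
    using img S(3) by (auto simp: X0_def)
  have pc: "p k \<in> carrier G" "fr (p k) = ek Hgrp k xH" for k
    using xs(1)[of k] by (auto simp: p_def inv_into_into f_inv_into_f)
  have qc: "q k \<in> carrier G" "fr (q k) = ek Hgrp k yH" for k
    using xs(2)[of k] by (auto simp: q_def inv_into_into f_inv_into_f)
  have delta: "psi j (p k \<otimes>\<^bsub>G\<^esub> q k) - psi j (p k) - psi j (q k) = (if j = k then dH else 0)" for j k
  proof -
    have "fr (p k \<otimes>\<^bsub>G\<^esub> q k) = ek Hgrp k (xH \<otimes>\<^bsub>?H\<^esub> yH)"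
      using pc qc ek_mult[OF H] by simp
    then show ?thesis
      using group.homog_one[OF H]
      by (simp add: psi_def pc qc ek_def dH_def Hgrp_one monoid.l_one[OF group.is_monoid[OF H]])
  qed
  have "\<not> qm_quotient_finite_dim G"
    by (rule not_fin_dim_crit[OF G psi_hqm pc(1) qc(1) _ delta]) (use dH_pos in auto)
  moreover have "\<forall>m\<ge>1. \<forall>w\<in>carrier (free_group m) - commutator_subgroup_free m. word_map_surjective G m w"
    using divisible_word_surj[OF G dG] by blast
  moreover have "countable (carrier G)" by simp
  ultimately show ?thesis using G by blast
qed

end
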